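(* Let $(X_1,Y_1),(X_2,Y_2),\dots$ be a random sample (i.i.d. copies) of a random vector $(X,Y)$ with continuous joint distribution function and (unique) copula $A$, and assume that $A$ allows a continuous Markov kernel $K_A$. Let $E_n$ be the empirical copula of $(X_1,Y_1),\dots,(X_n,Y_n)$ and set $N(n):=\lfloor n^s\rfloor$ for some $s\in(0,\tfrac12)$. Then, almost surely, $$\lim_{n\to\infty}\sup_{(x,y)\in[0,1]^2}\left|K_{\mathcal{B}_{N(n)}(E_n)}(x,[0,y])-K_A(x,[0,y])\right|=0,$$ i.e. $(\mathcal{B}_{N(n)}(E_n))_{n\in\mathbb{N}}$ converges uniformly conditional to $A$ almost surely.
   Context: A (bivariate) copula is a distribution function on $[0,1]^2$ with uniform marginals; each copula $B$ corresponds to a doubly stochastic measure $\mu_B$ with $B(x,y)=\mu_B([0,x]\times[0,y])$. A Markov kernel of $B$ is a map $K_B:[0,1]\times\mathcal{B}([0,1])\to[0,1]$, measurable in the first argument, a probability measure in the second, with $\int_{E_1}K_B(x,E_2)\,d\lambda(x)=\mu_B(E_1\times E_2)$ for all Borel $E_1,E_2$ ($\lambda$ = Lebesgue measure). $A$ allows a continuous Markov kernel if it has a version $K_A$ with $(x,y)\mapsto K_A(x,[0,y])$ continuous on $[0,1]^2$; $K_A$ denotes this version. Bernstein approximation: $p_{N,k}(u)=\binom Nk u^k(1-u)^{N-k}$ for $k\in\{0,\dots,N\}$ and $p_{N,k}\equiv0$ otherwise; for a copula $B$, $\mathcal{B}_N(B)(x,y)=\sum_{i,j=1}^N B(\tfrac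 iN,\tfrac jN)p_{N,i}(x)p_{N,j}(y)$, with Markov kernel version $K_{\mathcal{B}_N(B)}(x,[0,y])=N\sum_{i,j=1}^N B(\tfrac iN,\tfrac jN)\big(p_{N-1,i-1}(x)-p_{N-1,i}(x)\big)p_{N,j}(y)$. Empirical copula: with $F_n,G_n,H_n$ the empirical marginal and bivariate distribution functions of the first $n$ observations, almost surely there is a unique subcopula $E_n'$ on $\{0,\tfrac1n,\dots,1\}^2$ with $H_n(x,y)=E_n'(F_n(x),G_n(y))$, and $E_n$ is its extension to a copula by bilinear interpolation on each square $[\tfrac{i-1}n,\tfrac in]\times[\tfrac{j-1}n,\tfrac jn]$. *)

theory Defs
  imports "HOL-Probability.Probability"
begin

text \<open>Copulas as functions on the unit square (values outside [0,1]^2 irrelevant).\<close>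
definition is_copula :: "(real \<Rightarrow> real \<Rightarrow> real) \<Rightarrow> bool" where
  "is_copula C \<longleftrightarrow>
     (\<forall>u\<in>{0..1}. C u 0 = 0 \<and> C 0 u = 0 \<and> C u 1 = u \<and> C 1 u = u) \<and>
     (\<forall>u1 u2 v1 v2. 0 \<le> u1 \<and> u1 \<le> u2 \<and> u2 \<le> 1 \<and> 0 \<le> v1 \<and> v1 \<le> v2 \<and> v2 \<le> 1 \<longrightarrow>
        C u2 v2 - C u1 v2 - C u2 v1 + C u1 v1 \<ge> 0)"

text \<open>k x y plays the role of K(x,[0,y]) for a Markov kernel K of the copula C whose
  map (x,y) \<mapsto> K(x,[0,y]) is continuous on [0,1]^2: for each x, y \<mapsto> k x y is the
  distribution function of a probability measure on [0,1], and the kernel property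
  \<integral>_{[0,x]} K(t,[0,y]) dt = C(x,y) holds (which determines \<mu>_C on all Borel rectangles).\<close>
definition cont_markov_kernel :: "(real \<Rightarrow> real \<Rightarrow> real) \<Rightarrow> (real \<Rightarrow> real \<Rightarrow> real) \<Rightarrow> bool" where
  "cont_markov_kernel C k \<longleftrightarrow>
     continuous_on ({0..1} \<times> {0..1}) (\<lambda>(x,y). k x y) \<and>
     (\<forall>x\<in>{0..1}. mono_on {0..1} (k x) \<and> k x 1 = 1 \<and> (\<forall>y\<in>{0..1}. 0 \<le> k x y)) \<and>
     (\<forall>x\<in>{0..1}. \<forall>y\<in>{0..1}. (LBINT t:{0..x}. k t y) = C x y)"

definition allows_cont_markov_kernel :: "(real \<Rightarrow> real \<Rightarrow> real) \<Rightarrow> bool" where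
  "allows_cont_markov_kernel C \<longleftrightarrow> (\<exists>k. cont_markov_kernel C k)"

definition bern :: "nat \<Rightarrow> nat \<Rightarrow> real \<Rightarrow> real" where
  "bern N k u = (if k \<le> N then real (N choose k) * u ^ k * (1 - u) ^ (N - k) else 0)"

text \<open>K_{B_N(B)}(x,[0,y]).\<close>
definition bernstein_kernel :: "nat \<Rightarrow> (real \<Rightarrow> real \<Rightarrow> real) \<Rightarrow> real \<Rightarrow> real \<Rightarrow> real" where
  "bernstein_kernel N B x y = real N * (\<Sum>i=1..N. \<Sum>j=1..N.
      B (real i / real N) (real j / real N) *
      (bern (N - 1) (i - 1) x - bern (N - 1) i x) * bern N j y)"

definition emp_df :: "nat \<Rightarrow> (nat \<Rightarrow> real) \<Rightarrow> real \<Rightarrow> real" where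
  "emp_df n Z z = real (card {k. k < n \<and> Z k \<le> z}) / real n"

definition emp_joint_df :: "nat \<Rightarrow> (nat \<Rightarrow> real) \<Rightarrow> (nat \<Rightarrow> real) \<Rightarrow> real \<Rightarrow> real \<Rightarrow> real" where
  "emp_joint_df n Xs Ys x y = real (card {k. k < n \<and> Xs k \<le> x \<and> Ys k \<le> y}) / real n"

definition grid :: "nat \<Rightarrow> real set" where
  "grid n = {real i / real n | i. i \<le> n}"

text \<open>The (a.s. unique) subcopula E_n' on the grid with H_n(x,y) = E_n'(F_n x, G_n y);
  set to 0 off the grid.\<close>
definition emp_subcopula :: "nat \<Rightarrow> (nat \<Rightarrow> real) \<Rightarrow> (nat \<Rightarrow> real) \<Rightarrow> real \<Rightarrow> real \<Rightarrow> real" where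
  "emp_subcopula n Xs Ys = (THE S.
      (\<forall>x y. emp_joint_df n Xs Ys x y = S (emp_df n Xs x) (emp_df n Ys y)) \<and>
      (\<forall>u v. (u,v) \<notin> grid n \<times> grid n \<longrightarrow> S u v = 0))"

text \<open>Empirical copula: bilinear interpolation of E_n' on the squares
  [(i-1)/n,i/n] x [(j-1)/n,j/n].\<close>
definition emp_copula :: "nat \<Rightarrow> (nat \<Rightarrow> real) \<Rightarrow> (nat \<Rightarrow> real) \<Rightarrow> real \<Rightarrow> real \<Rightarrow> real" where
  "emp_copula n Xs Ys u v =
     (let S = emp_subcopula n Xs Ys;
          i = min (n - 1) (nat \<lfloor>real n * u\<rfloor>);
          j = min (n - 1) (nat \<lfloor>real n * v\<rfloor>);
          a = real n * u - real i;
          b = real n * v - real j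
      in (1 - a) * (1 - b) * S (real i / real n) (real j / real n)
         + a * (1 - b) * S (real (i + 1) / real n) (real j / real n)
         + (1 - a) * b * S (real i / real n) (real (j + 1) / real n)
         + a * b * S (real (i + 1) / real n) (real (j + 1) / real n))"

end

theory Submission
  imports Defs "HOL-Real_Asymp.Real_Asymp"
begin

lemma copula_bounds:
  assumes "is_copula A" "u \<in> {0..1}" "v \<in> {0..1}"
  shows "0 \<le> A u v" "A u v \<le> 1"
proof -
  have b: "\<And>u. u\<in>{0..1} \<Longrightarrow> A u 0 = 0 \<and> A 0 u = 0 \<and> A u 1 = u \<and> A 1 u = u"
    and r: "\<And>u1 u2 v1 v2. 0 \<le> u1 \<Longrightarrow> u1 \<le> u2 \<Longrightarrow> u2 \<le> 1 \<Longrightarrow> 0 \<le> v1 \<Longrightarrow> v1 \<le> v2 \<Longrightarrow> v2 \<le> 1 \<Longrightarrow>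
        A u2 v2 - A u1 v2 - A u2 v1 + A u1 v1 \<ge> 0"
    using assms(1) unfolding is_copula_def by blast+
  have "A u v - A 0 v - A u 0 + A 0 0 \<ge> 0" using r[of 0 u 0 v] assms by auto
  then show "0 \<le> A u v" using b[of u] b[of v] b[of 0] assms by auto
  have "A u 1 - A 0 1 - A u v + A 0 v \<ge> 0" using r[of 0 u v 1] assms by auto
  then show "A u v \<le> 1" using b[of u] b[of v] b[of 1] b[of 0] assms by auto
qed

lemma copula_lip1:
  assumes "is_copula A" "u \<in> {0..1}" "u' \<in> {0..1}" "v \<in> {0..1}"
  shows "\<bar>A u v - A u' v\<bar> \<le> \<bar>u - u'\<bar>"
proof -
  have b: "\<And>u. u\<in>{0..1} \<Longrightarrow> A u 0 = 0 \<and> A 0 u = 0 \<and> A u 1 = u \<and> A 1 u = u"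
    and r: "\<And>u1 u2 v1 v2. 0 \<le> u1 \<Longrightarrow> u1 \<le> u2 \<Longrightarrow> u2 \<le> 1 \<Longrightarrow> 0 \<le> v1 \<Longrightarrow> v1 \<le> v2 \<Longrightarrow> v2 \<le> 1 \<Longrightarrow>
        A u2 v2 - A u1 v2 - A u2 v1 + A u1 v1 \<ge> 0"
    using assms(1) unfolding is_copula_def by blast+
  have *: "0 \<le> A b v - A a v \<and> A b v - A a v \<le> b - a" if "0 \<le> a" "a \<le> b" "b \<le> 1" for a b
  proof -
    have "A b v - A a v - A b 0 + A a 0 \<ge> 0" using r[of a b 0 v] that assms by auto
    moreover have "A b 1 - A a 1 - A b v + A a v \<ge> 0" using r[of a b v 1] that assms by auto
    ultimately show ?thesis using b[of a] b[of b] that by auto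
  qed
  show ?thesis
  proof (cases "u \<le> u'")
    case True then show ?thesis using *[of u u'] assms by auto
  next
    case False then show ?thesis using *[of u' u] assms by auto
  qed
qed

lemma copula_lip2:
  assumes "is_copula A" "v \<in> {0..1}" "v' \<in> {0..1}" "u \<in> {0..1}"
  shows "\<bar>A u v - A u v'\<bar> \<le> \<bar>v - v'\<bar>"
proof -
  have b: "\<And>u. u\<in>{0..1} \<Longrightarrow> A u 0 = 0 \<and> A 0 u = 0 \<and> A u 1 = u \<and> A 1 u = u"
    and r: "\<And>u1 u2 v1 v2. 0 \<le> u1 \<Longrightarrow> u1 \<le> u2 \<Longrightarrow> u2 \<le> 1 \<Longrightarrow> 0 \<le> v1 \<Longrightarrow> v1 \<le> v2 \<Longrightarrow> v2 \<le> 1 \<Longrightarrow>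
        A u2 v2 - A u1 v2 - A u2 v1 + A u1 v1 \<ge> 0"
    using assms(1) unfolding is_copula_def by blast+
  have *: "0 \<le> A u b - A u a \<and> A u b - A u a \<le> b - a" if "0 \<le> a" "a \<le> b" "b \<le> 1" for a b
  proof -
    have "A u b - A 0 b - A u a + A 0 a \<ge> 0" using r[of 0 u a b] that assms by auto
    moreover have "A 1 b - A u b - A 1 a + A u a \<ge> 0" using r[of u 1 a b] that assms by auto
    ultimately show ?thesis using b[of a] b[of b] that by auto
  qed
  show ?thesis
  proof (cases "v \<le> v'")
    case True then show ?thesis using *[of v v'] assms by auto
  next
    case False then show ?thesis using *[of v' v] assms by auto
  qed
qed

lemma copula_lip:
  assumes "is_copula A" "u \<in> {0..1}" "u' \<in> {0..1}" "v \<in> {0..1}" "v' \<in> {0..1}"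
  shows "\<bar>A u v - A u' v'\<bar> \<le> \<bar>u - u'\<bar> + \<bar>v - v'\<bar>"
  using copula_lip1[OF assms(1,2,3,4)] copula_lip2[OF assms(1,4,5,3)] by linarith

lemma bern_Bernstein: "k \<le> N \<Longrightarrow> bern N k x = Bernstein N k x"
  by (simp add: bern_def Bernstein_def)

lemma bern_nonneg: "x \<in> {0..1} \<Longrightarrow> 0 \<le> bern N k x"
  by (simp add: bern_def)

lemma bern_sum: "(\<Sum>k\<le>N. bern N k x) = 1"
  using sum_Bernstein[of N x] by (simp add: bern_Bernstein)

lemma bern_sum_le:
  assumes "finite S" "x \<in> {0..1}"
  shows "(\<Sum>k\<in>S. bern N k x) \<le> 1"
proof -
  have "(\<Sum>k\<in>S. bern N k x) = (\<Sum>k\<in>S \<inter> {..N}. bern N k x)"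
    by (rule sum.mono_neutral_right) (auto simp: assms bern_def)
  also have "\<dots> \<le> (\<Sum>k\<le>N. bern N k x)"
    by (rule sum_mono2) (auto intro: bern_nonneg[OF assms(2)] simp: assms(1))
  finally show ?thesis by (simp add: bern_sum)
qed

lemma sum_shift_1N: "(\<Sum>i=1..(N::nat). f (i - 1)) = (\<Sum>k<N. (f k :: real))"
  by (induction N) (auto simp: atLeastAtMostSuc_conv)

lemma kernel_perturb:
  assumes N: "N \<ge> 1" and x: "x \<in> {0..1}" and y: "y \<in> {0..1}"
    and d: "\<And>i j. i \<in> {1..N} \<Longrightarrow> j \<in> {1..N} \<Longrightarrow>
             \<bar>B (real i / real N) (real j / real N) - A (real i / real N) (real j / real N)\<bar> \<le> \<delta>"
  shows "\<bar>bernstein_kernel N B x y - bernstein_kernel N A x y\<bar> \<le> 2 * real N * \<delta>"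
proof -
  define q where "q i = bern (N - 1) i x" for i
  define p where "p j = bern N j y" for j
  define c where "c i j = B (real i / real N) (real j / real N) - A (real i / real N) (real j / real N)" for i j
  have qn: "q i \<ge> 0" for i using x by (simp add: q_def bern_nonneg)
  have pn: "p j \<ge> 0" for j using y by (simp add: p_def bern_nonneg)
  have dpos: "\<delta> \<ge> 0" using d[of 1 1] N by auto
  have "bernstein_kernel N B x y - bernstein_kernel N A x y =
      real N * (\<Sum>i=1..N. \<Sum>j=1..N. c i j * (q (i - 1) - q i) * p j)"
    unfolding bernstein_kernel_def c_def q_def p_def right_diff_distrib[symmetric] sum_subtractf[symmetric]
    by (intro arg_cong[where f="\<lambda>z. real N * z"] sum.cong refl) (simp add: left_diff_distrib)
  also have "\<bar>\<dots>\<bar> \<le> real N * (\<Sum>i=1..N. \<Sum>j=1..N. \<delta> * (q (i - 1) + q i) * p j)"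
  proof -
    have "\<bar>\<Sum>i=1..N. \<Sum>j=1..N. c i j * (q (i - 1) - q i) * p j\<bar>
        \<le> (\<Sum>i=1..N. \<bar>\<Sum>j=1..N. c i j * (q (i - 1) - q i) * p j\<bar>)" by (rule sum_abs)
    also have "\<dots> \<le> (\<Sum>i=1..N. \<Sum>j=1..N. \<bar>c i j * (q (i - 1) - q i) * p j\<bar>)"
      by (intro sum_mono sum_abs)
    also have "\<dots> \<le> (\<Sum>i=1..N. \<Sum>j=1..N. \<delta> * (q (i - 1) + q i) * p j)"
    proof (intro sum_mono)
      fix i j assume ij: "i \<in> {1..N}" "j \<in> {1..N}"
      have "\<bar>c i j * (q (i - 1) - q i) * p j\<bar> = \<bar>c i j\<bar> * \<bar>q (i - 1) - q i\<bar> * p j"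
        using pn by (simp add: abs_mult)
      also have "\<dots> \<le> \<delta> * (q (i - 1) + q i) * p j"
        using d[OF ij] qn[of i] qn[of "i-1"] pn[of j] dpos
        by (intro mult_mono) (auto simp: c_def)
      finally show "\<bar>c i j * (q (i - 1) - q i) * p j\<bar> \<le> \<delta> * (q (i - 1) + q i) * p j" .
    qed
    finally show ?thesis by (simp add: abs_mult mult_left_mono)
  qed
  also have "(\<Sum>i=1..N. \<Sum>j=1..N. \<delta> * (q (i - 1) + q i) * p j)
      = \<delta> * (\<Sum>i=1..N. q (i - 1) + q i) * (\<Sum>j=1..N. p j)"
  proof -
    have "(\<Sum>i=1..N. \<Sum>j=1..N. \<delta> * (q (i - 1) + q i) * p j)
        = (\<Sum>i=1..N. \<delta> * (q (i - 1) + q i) * (\<Sum>j=1..N. p j))"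
      by (simp add: sum_distrib_left)
    also have "\<dots> = (\<Sum>i=1..N. \<delta> * (q (i - 1) + q i)) * (\<Sum>j=1..N. p j)"
      by (simp add: sum_distrib_right)
    finally show ?thesis by (simp add: sum_distrib_left)
  qed
  also have "\<dots> \<le> \<delta> * 2 * 1"
  proof (rule mult_mono)
    have "(\<Sum>i=1..N. q (i - 1) + q i) = (\<Sum>k<N. q k) + (\<Sum>i=1..N. q i)"
      using sum_shift_1N[of q N] by (simp add: sum.distrib)
    also have "\<dots> \<le> 1 + 1" unfolding q_def
      by (intro add_mono bern_sum_le x) auto
    finally show "\<delta> * (\<Sum>i = 1..N. q (i - 1) + q i) \<le> \<delta> * 2" using dpos
      by (simp add: mult_left_mono)
    show "(\<Sum>j = 1..N. p j) \<le> 1" unfolding p_def by (intro bern_sum_le y) auto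
  qed (auto simp: dpos sum_nonneg pn qn)
  finally show ?thesis using N by (simp add: mult_left_mono mult_ac)
qed

lemma K_bounds:
  assumes "cont_markov_kernel A K" "x \<in> {0..1}" "y \<in> {0..1}"
  shows "0 \<le> K x y" "K x y \<le> 1"
proof -
  have m: "mono_on {0..1} (K x)" and k1: "K x 1 = 1" and nn: "\<forall>y\<in>{0..1}. 0 \<le> K x y"
    using assms unfolding cont_markov_kernel_def by auto
  show "0 \<le> K x y" using nn assms by auto
  have "K x y \<le> K x 1" using mono_onD[OF m, of y 1] assms by auto
  then show "K x y \<le> 1" using k1 by simp
qed

lemma K_cont_x:
  assumes "cont_markov_kernel A K" "v \<in> {0..1}"
  shows "continuous_on {0..1} (\<lambda>t. K t v)"
proof -
  have c: "continuous_on ({0..1} \<times> {0..1}) (\<lambda>(x,y). K x y)"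
    using assms unfolding cont_markov_kernel_def by auto
  have "continuous_on {0..1} (\<lambda>t. (\<lambda>(x,y). K x y) (t, v))"
    by (rule continuous_on_compose2[OF c]) (use assms(2) in \<open>auto intro!: continuous_intros\<close>)
  then show ?thesis by simp
qed

lemma A_integral:
  assumes "cont_markov_kernel A K" "u \<in> {0..1}" "v \<in> {0..1}"
  shows "A u v = integral {0..u} (\<lambda>t. K t v)"
proof -
  have c: "continuous_on {0..u} (\<lambda>t. K t v)"
    using K_cont_x[OF assms(1,3)] by (rule continuous_on_subset) (use assms(2) in auto)
  have "(LBINT t:{0..u}. K t v) = A u v"
    using assms unfolding cont_markov_kernel_def by auto
  then show ?thesis
    using set_borel_integral_eq_integral(2)[OF borel_integrable_atLeastAtMost'[OF c]] by simp
qed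

lemma A_mvt:
  assumes K: "cont_markov_kernel A K" and ab: "0 \<le> a" "a < b" "b \<le> 1" and v: "v \<in> {0..1}"
  shows "\<exists>\<xi>. a \<le> \<xi> \<and> \<xi> \<le> b \<and> A b v - A a v = (b - a) * K \<xi> v"
proof -
  define g where "g u = integral {0..u} (\<lambda>t. K t v)" for u
  have c: "continuous_on {0..1} (\<lambda>t. K t v)" by (rule K_cont_x[OF K v])
  have d: "(g has_real_derivative K t v) (at t within {0..1})" if "t \<in> {0..1}" for t
    unfolding g_def by (rule integral_has_real_derivative[OF c that])
  have "continuous_on {0..1} g"
    unfolding continuous_on_eq_continuous_within using d DERIV_continuous by blast
  then have cg: "continuous_on {a..b} g" by (rule continuous_on_subset) (use ab in auto)
  have da: "(g has_real_derivative K t v) (at t)" if "0 < t" "t < 1" for t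
    using d[of t] that at_within_Icc_at[of 0 t 1] by auto
  have "\<And>x. a < x \<Longrightarrow> x < b \<Longrightarrow> g differentiable (at x)"
    using da ab by (metis less_le_trans le_less_trans real_differentiable_def)
  from MVT[OF ab(2) cg this] obtain l z where z: "a < z" "z < b" "DERIV g z :> l" "g b - g a = (b - a) * l"
    by blast
  have "l = K z v" using DERIV_unique[OF z(3) da[of z]] z ab by auto
  moreover have "A b v = g b" "A a v = g a"
    using A_integral[OF K _ v, of b] A_integral[OF K _ v, of a] ab by (auto simp: g_def)
  ultimately show ?thesis using z by (intro exI[of _ z]) auto
qed

lemma K_unif:
  assumes K: "cont_markov_kernel A K" and e: "e > 0"
  shows "\<exists>C>0. \<forall>x\<in>{0..1}. \<forall>y\<in>{0..1}. \<forall>x'\<in>{0..1}. \<forall>y'\<in>{0..1}.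
           \<bar>K x' y' - K x y\<bar> \<le> e + C * ((x' - x)\<^sup>2 + (y' - y)\<^sup>2)"
proof -
  have c: "continuous_on ({0..1} \<times> {0..1}) (\<lambda>(x,y). K x y)"
    using K unfolding cont_markov_kernel_def by auto
  have "uniformly_continuous_on ({0..1::real} \<times> {0..1::real}) (\<lambda>(x,y). K x y)"
    by (rule compact_uniformly_continuous[OF c]) (auto intro: compact_Times)
  then obtain d where d: "d > 0" and
    dd: "\<And>p p'. p \<in> {0..1} \<times> {0..1} \<Longrightarrow> p' \<in> {0..1} \<times> {0..1} \<Longrightarrow> dist p' p < d \<Longrightarrow>
            dist ((\<lambda>(x,y). K x y) p') ((\<lambda>(x,y). K x y) p) < e"
    unfolding uniformly_continuous_on_def using e by metis
  define C where "C = 4 / d\<^sup>2"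
  have C: "C > 0" using d by (simp add: C_def)
  show ?thesis
  proof (intro exI[of _ C] conjI C ballI)
    fix x y x' y' :: real assume xy: "x \<in> {0..1}" "y \<in> {0..1}" "x' \<in> {0..1}" "y' \<in> {0..1}"
    have nn: "0 \<le> C * ((x' - x)\<^sup>2 + (y' - y)\<^sup>2)" using C by simp
    show "\<bar>K x' y' - K x y\<bar> \<le> e + C * ((x' - x)\<^sup>2 + (y' - y)\<^sup>2)"
    proof (cases "\<bar>x' - x\<bar> < d/2 \<and> \<bar>y' - y\<bar> < d/2")
      case True
      have "dist (x', y') (x, y) \<le> \<bar>x' - x\<bar> + \<bar>y' - y\<bar>"
        unfolding dist_Pair_Pair dist_real_def using sqrt_sum_squares_le_sum_abs[of "x' - x" "y' - y"] by simp
      also have "\<dots> < d" using True by linarith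
      finally have "dist (K x' y') (K x y) < e" using dd[of "(x,y)" "(x',y')"] xy by auto
      then show ?thesis using nn by (simp add: dist_real_def)
    next
      case False
      have b: "\<bar>K x' y' - K x y\<bar> \<le> 1"
        using K_bounds[OF K xy(1,2)] K_bounds[OF K xy(3,4)] by linarith
      have "1 \<le> C * ((x' - x)\<^sup>2 + (y' - y)\<^sup>2)"
      proof -
        have "(d/2)\<^sup>2 \<le> (x' - x)\<^sup>2 + (y' - y)\<^sup>2"
        proof (cases "\<bar>x' - x\<bar> < d/2")
          case True
          then have "d/2 \<le> \<bar>y' - y\<bar>" using False by auto
          then have "(d/2)\<^sup>2 \<le> \<bar>y' - y\<bar>\<^sup>2" using d by (intro power_mono) auto
          then have "(d/2)\<^sup>2 \<le> (y' - y)\<^sup>2" by simp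
          then show ?thesis using zero_le_power2[of "x' - x"] by linarith
        next
          case False
          then have "d/2 \<le> \<bar>x' - x\<bar>" by auto
          then have "(d/2)\<^sup>2 \<le> \<bar>x' - x\<bar>\<^sup>2" using d by (intro power_mono) auto
          then have "(d/2)\<^sup>2 \<le> (x' - x)\<^sup>2" by simp
          then show ?thesis using zero_le_power2[of "y' - y"] by linarith
        qed
        then have "C * (d/2)\<^sup>2 \<le> C * ((x' - x)\<^sup>2 + (y' - y)\<^sup>2)" using C by (intro mult_left_mono) auto
        moreover have "C * (d/2)\<^sup>2 = 1" using d by (simp add: C_def power2_eq_square field_simps)
        ultimately show ?thesis by simp
      qed
      then show ?thesis using b e by linarith
    qed
  qed
qed

lemma bern_moment:
  assumes n: "n \<ge> 1"
  shows "(\<Sum>k\<le>n. (x - real k / real n)\<^sup>2 * bern n k x) = x * (1 - x) / real n"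
proof -
  have *: "\<And>a b x::real. (a - b)\<^sup>2 * x = a * (a - 1) * x + (1 - 2 * b) * a * x + b * b * x"
    by (simp add: algebra_simps power2_eq_square)
  have "(\<Sum>k\<le>n. (k - n * x)\<^sup>2 * Bernstein n k x) = n * x * (1 - x)"
    apply (simp add: * sum.distrib)
    apply (simp flip: sum_distrib_left add: mult.assoc)
    apply (simp add: algebra_simps power2_eq_square)
    done
  then have "(\<Sum>k\<le>n. (k - n * x)\<^sup>2 * Bernstein n k x)/n^2 = x * (1 - x) / n"
    by (simp add: power2_eq_square)
  then have "(\<Sum>k\<le>n. (x - k/n)\<^sup>2 * Bernstein n k x) = x * (1 - x) / n"
    using n by (simp add: sum_divide_distrib field_split_simps power2_commute)
  then show ?thesis by (simp add: bern_Bernstein)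
qed

lemma abel_sum:
  fixes a q :: "nat \<Rightarrow> real"
  assumes "a 0 = 0"
  shows "(\<Sum>i=1..N. a i * (q (i - 1) - q i)) = (\<Sum>i<N. (a (Suc i) - a i) * q i) - a N * q N"
  by (induction N) (auto simp: assms atLeastAtMostSuc_conv algebra_simps)

lemma sep_sum:
  fixes \<alpha> :: real
  shows "(\<Sum>i\<in>I. \<Sum>j\<in>J. (\<alpha> + \<beta> i + \<gamma> j) * (q i * p j)) =
    \<alpha> * (\<Sum>i\<in>I. q i) * (\<Sum>j\<in>J. p j) + (\<Sum>i\<in>I. \<beta> i * q i) * (\<Sum>j\<in>J. p j) + (\<Sum>i\<in>I. q i) * (\<Sum>j\<in>J. \<gamma> j * p j)"
proof -
  have e: "(\<alpha> + \<beta> i + \<gamma> j) * (q i * p j) = \<alpha> * (q i * p j) + (\<beta> i * q i) * p j + q i * (\<gamma> j * p j)" for i j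
    by (simp add: algebra_simps)
  have "(\<Sum>i\<in>I. \<Sum>j\<in>J. (\<alpha> + \<beta> i + \<gamma> j) * (q i * p j)) =
     (\<Sum>i\<in>I. \<Sum>j\<in>J. \<alpha> * (q i * p j)) + (\<Sum>i\<in>I. \<Sum>j\<in>J. (\<beta> i * q i) * p j) + (\<Sum>i\<in>I. \<Sum>j\<in>J. q i * (\<gamma> j * p j))"
    unfolding e sum.distrib by simp
  also have "\<dots> = \<alpha> * ((\<Sum>i\<in>I. q i) * (\<Sum>j\<in>J. p j)) + (\<Sum>i\<in>I. \<beta> i * q i) * (\<Sum>j\<in>J. p j) + (\<Sum>i\<in>I. q i) * (\<Sum>j\<in>J. \<gamma> j * p j)"
  proof -
    have 1: "(\<Sum>i\<in>I. \<Sum>j\<in>J. \<alpha> * (q i * p j)) = \<alpha> * ((\<Sum>i\<in>I. q i) * (\<Sum>j\<in>J. p j))"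
      unfolding sum_product by (simp add: sum_distrib_left)
    have 2: "(\<Sum>i\<in>I. \<Sum>j\<in>J. (\<beta> i * q i) * p j) = (\<Sum>i\<in>I. \<beta> i * q i) * (\<Sum>j\<in>J. p j)"
      by (rule sum_product[symmetric])
    have 3: "(\<Sum>i\<in>I. \<Sum>j\<in>J. q i * (\<gamma> j * p j)) = (\<Sum>i\<in>I. q i) * (\<Sum>j\<in>J. \<gamma> j * p j)"
      by (rule sum_product[symmetric])
    show ?thesis using 1 2 3 by simp
  qed
  finally show ?thesis by (simp add: mult.assoc)
qed

lemma xi_bound:
  assumes N: "N \<ge> 2" and i: "i \<le> N - 1" and xi: "real i / real N \<le> \<xi>" "\<xi> \<le> real (Suc i) / real N"
  shows "\<bar>\<xi> - real i / real (N - 1)\<bar> \<le> 1 / real N"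
proof -
  have N1: "real (N - 1) = real N - 1" using N by auto
  have Np: "real N - 1 > 0" using N by auto
  have a: "real i / real (N - 1) - real i / real N = real i / ((real N - 1) * real N)"
    using Np N1 by (simp add: field_simps)
  have i': "real i \<le> real N - 1" using i N by linarith
  have "real i / ((real N - 1) * real N) \<le> (real N - 1) / ((real N - 1) * real N)"
    using i' Np N by (intro divide_right_mono) auto
  also have "\<dots> = 1 / real N" using Np by simp
  finally have b: "real i / ((real N - 1) * real N) \<le> 1 / real N" .
  have c: "0 \<le> real i / ((real N - 1) * real N)" using Np by simp
  have d: "real (Suc i) / real N = real i / real N + 1 / real N" by (simp add: add_divide_distrib)
  have gen: "\<And>a b c e \<xi>::real. a - b = c \<Longrightarrow> c \<le> e \<Longrightarrow> 0 \<le> c \<Longrightarrow> b \<le> \<xi> \<Longrightarrow> \<xi> \<le> b + e \<Longrightarrow> \<bar>\<xi> - a\<bar> \<le> e"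
    by linarith
  show ?thesis by (rule gen[OF a b c xi(1)]) (use xi(2) d in simp)
qed

lemma BK_rewrite:
  fixes N :: nat and x y :: real
  assumes A: "is_copula A" and N: "N \<ge> 2"
  shows "bernstein_kernel N A x y = (\<Sum>i\<le>N - 1. \<Sum>j\<le>N.
      real N * (A (real (Suc i) / real N) (real j / real N) - A (real i / real N) (real j / real N))
      * (bern (N - 1) i x * bern N j y))"
proof -
  have bA: "\<And>u. u\<in>{0..1} \<Longrightarrow> A u 0 = 0 \<and> A 0 u = 0"
    using A unfolding is_copula_def by blast
  define q where "q i = bern (N - 1) i x" for i
  define p where "p j = bern N j y" for j
  define f where "f i = (\<Sum>j=1..N. A (real i / real N) (real j / real N) * p j)" for i
  have 1: "bernstein_kernel N A x y = real N * (\<Sum>i=1..N. f i * (q (i - 1) - q i))"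
    unfolding bernstein_kernel_def f_def q_def p_def
    by (simp add: sum_distrib_left sum_distrib_right mult_ac)
  have f0: "f 0 = 0" unfolding f_def using bA N by (auto intro!: sum.neutral)
  have qN: "q N = 0" unfolding q_def bern_def using N by auto
  have 2: "(\<Sum>i=1..N. f i * (q (i - 1) - q i)) = (\<Sum>i<N. (f (Suc i) - f i) * q i)"
    using abel_sum[where a=f and q=q and N=N] f0 qN by simp
  have 3: "real N * ((f (Suc i) - f i) * q i) = (\<Sum>j\<le>N.
      real N * (A (real (Suc i) / real N) (real j / real N) - A (real i / real N) (real j / real N))
      * (q i * p j))" if "i < N" for i
  proof -
    have "real N * ((f (Suc i) - f i) * q i) = (\<Sum>j=1..N.
      real N * (A (real (Suc i) / real N) (real j / real N) - A (real i / real N) (real j / real N))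
      * (q i * p j))"
      unfolding f_def by (simp add: sum_subtractf[symmetric] sum_distrib_left sum_distrib_right algebra_simps)
    also have "\<dots> = (\<Sum>j\<le>N.
      real N * (A (real (Suc i) / real N) (real j / real N) - A (real i / real N) (real j / real N))
      * (q i * p j))"
    proof (rule sum.mono_neutral_left)
      show "\<forall>j\<in>{..N} - {1..N}. real N * (A (real (Suc i) / real N) (real j / real N) -
          A (real i / real N) (real j / real N)) * (q i * p j) = 0"
      proof
        fix j assume "j \<in> {..N} - {1..N}"
        then have j: "j = 0" by auto
        have "real (Suc i) / real N \<in> {0..1}" "real i / real N \<in> {0..1}" using that by auto
        then show "real N * (A (real (Suc i) / real N) (real j / real N) -
          A (real i / real N) (real j / real N)) * (q i * p j) = 0" using bA j by auto
      qed
    qed auto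
    finally show ?thesis .
  qed
  have "bernstein_kernel N A x y = (\<Sum>i<N. real N * ((f (Suc i) - f i) * q i))"
    using 1 2 by (simp add: sum_distrib_left[symmetric])
  also have "\<dots> = (\<Sum>i<N. \<Sum>j\<le>N.
      real N * (A (real (Suc i) / real N) (real j / real N) - A (real i / real N) (real j / real N))
      * (q i * p j))"
    by (rule sum.cong[OF refl 3]) auto
  also have "{..<N} = {..N - 1}" using N by auto
  finally show ?thesis by (simp add: q_def p_def)
qed

lemma sq_sum_le: "((a::real) + b)\<^sup>2 \<le> 2 * a\<^sup>2 + 2 * b\<^sup>2"
proof -
  have "0 \<le> (a - b)\<^sup>2" by simp
  then show ?thesis by (simp add: power2_eq_square algebra_simps)
qed

lemma kernel_approx:
  assumes A: "is_copula A" and K: "cont_markov_kernel A K" and e: "e > 0"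
  shows "\<exists>N0. \<forall>N\<ge>N0. \<forall>x\<in>{0..1}. \<forall>y\<in>{0..1}. \<bar>bernstein_kernel N A x y - K x y\<bar> \<le> e"
proof -
  obtain C where C: "C > 0" and Cb: "\<forall>x\<in>{0..1}. \<forall>y\<in>{0..1}. \<forall>x'\<in>{0..1}. \<forall>y'\<in>{0..1}.
           \<bar>K x' y' - K x y\<bar> \<le> e/2 + C * ((x' - x)\<^sup>2 + (y' - y)\<^sup>2)"
    using K_unif[OF K, of "e/2"] e by auto
  define N0 where "N0 = nat \<lceil>10 * C / e\<rceil> + 2"
  show ?thesis
  proof (intro exI[of _ N0] allI impI ballI)
    fix N :: nat and x y :: real
    assume N: "N \<ge> N0" and x: "x \<in> {0..1}" and y: "y \<in> {0..1}"
    have N2: "N \<ge> 2" using N by (simp add: N0_def)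
    define M where "M = N - 1"
    have RM: "real M = real N - 1" using N2 by (simp add: M_def)
    have M1: "M \<ge> 1" using N2 by (simp add: M_def)
    have Mbig: "real M \<ge> 10 * C / e"
    proof -
      have "10 * C / e \<le> real (nat \<lceil>10 * C / e\<rceil>)" by linarith
      also have "\<dots> \<le> real M" using N by (simp add: M_def N0_def)
      finally show ?thesis .
    qed
    define q where "q i = bern M i x" for i
    define p where "p j = bern N j y" for j
    define D where "D i j = real N * (A (real (Suc i) / real N) (real j / real N) - A (real i / real N) (real j / real N))" for i j
    have qn: "q i \<ge> 0" for i using x by (simp add: q_def bern_nonneg)
    have pn: "p j \<ge> 0" for j using y by (simp add: p_def bern_nonneg)
    have sq: "(\<Sum>i\<le>M. q i) = 1" unfolding q_def by (rule bern_sum)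
    have sp: "(\<Sum>j\<le>N. p j) = 1" unfolding p_def by (rule bern_sum)
    have BK: "bernstein_kernel N A x y = (\<Sum>i\<le>M. \<Sum>j\<le>N. D i j * (q i * p j))"
      unfolding BK_rewrite[OF A N2] D_def q_def p_def M_def by simp
    have Kxy: "K x y = (\<Sum>i\<le>M. \<Sum>j\<le>N. (K x y + (\<lambda>i. 0) i + (\<lambda>j. 0) j) * (q i * p j))"
      unfolding sep_sum sq sp by simp
    define \<alpha> where "\<alpha> = e/2 + 2 * C / (real N)\<^sup>2"
    define \<beta> where "\<beta> i = 2 * C * (x - real i / real M)\<^sup>2" for i
    define \<gamma> where "\<gamma> j = C * (y - real j / real N)\<^sup>2" for j
    have pt: "\<bar>D i j - K x y\<bar> \<le> \<alpha> + \<beta> i + \<gamma> j" if i: "i \<le> M" and j: "j \<le> N" for i j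
    proof -
      have Np: "real N > 0" using N2 by simp
      have ab: "0 \<le> real i / real N" "real i / real N < real (Suc i) / real N" "real (Suc i) / real N \<le> 1"
        using i N2 Np by (auto simp: M_def divide_strict_right_mono)
      have v: "real j / real N \<in> {0..1}" using j Np by auto
      obtain \<xi> where xi: "real i / real N \<le> \<xi>" "\<xi> \<le> real (Suc i) / real N"
        and eq: "A (real (Suc i) / real N) (real j / real N) - A (real i / real N) (real j / real N)
             = (real (Suc i) / real N - real i / real N) * K \<xi> (real j / real N)"
        using A_mvt[OF K ab v] by blast
      have Dxi: "D i j = K \<xi> (real j / real N)"
        unfolding D_def eq using Np by (simp add: field_simps)
      have xi01: "\<xi> \<in> {0..1}" using order_trans[OF ab(1) xi(1)] order_trans[OF xi(2) ab(3)] by simp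
      have "\<bar>K \<xi> (real j / real N) - K x y\<bar> \<le> e/2 + C * ((\<xi> - x)\<^sup>2 + (real j / real N - y)\<^sup>2)"
        using Cb x y xi01 v by blast
      moreover have "(\<xi> - x)\<^sup>2 \<le> 2 / (real N)\<^sup>2 + 2 * (x - real i / real M)\<^sup>2"
      proof -
        have b1: "\<bar>\<xi> - real i / real (N - 1)\<bar> \<le> 1 / real N"
          by (rule xi_bound[OF N2 _ xi]) (use i in \<open>simp add: M_def\<close>)
        have b2: "(\<xi> - real i / real M)\<^sup>2 \<le> (1 / real N)\<^sup>2"
          using b1 unfolding M_def by (metis abs_ge_zero power2_abs power_mono)
        have "(\<xi> - x)\<^sup>2 = ((\<xi> - real i / real M) + (real i / real M - x))\<^sup>2" by simp
        also have "\<dots> \<le> 2 * (\<xi> - real i / real M)\<^sup>2 + 2 * (real i / real M - x)\<^sup>2"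
          by (rule sq_sum_le)
        also have "\<dots> \<le> 2 / (real N)\<^sup>2 + 2 * (x - real i / real M)\<^sup>2"
          using b2 by (simp add: power2_commute power_divide)
        finally show ?thesis .
      qed
      ultimately have "\<bar>K \<xi> (real j / real N) - K x y\<bar> \<le> e/2 + C * (2 / (real N)\<^sup>2 + 2 * (x - real i / real M)\<^sup>2 + (y - real j / real N)\<^sup>2)"
      proof -
        assume h1: "\<bar>K \<xi> (real j / real N) - K x y\<bar> \<le> e/2 + C * ((\<xi> - x)\<^sup>2 + (real j / real N - y)\<^sup>2)"
          and h2: "(\<xi> - x)\<^sup>2 \<le> 2 / (real N)\<^sup>2 + 2 * (x - real i / real M)\<^sup>2"
        have "C * ((\<xi> - x)\<^sup>2 + (real j / real N - y)\<^sup>2) \<le> C * (2 / (real N)\<^sup>2 + 2 * (x - real i / real M)\<^sup>2 + (y - real j / real N)\<^sup>2)"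
          using h2 C by (intro mult_left_mono) (auto simp: power2_commute)
        then show ?thesis using h1 by linarith
      qed
      moreover have "C * (2 / (real N)\<^sup>2 + 2 * (x - real i / real M)\<^sup>2 + (y - real j / real N)\<^sup>2)
          = 2 * C / (real N)\<^sup>2 + 2 * C * (x - real i / real M)\<^sup>2 + C * (y - real j / real N)\<^sup>2"
        by (simp add: distrib_left)
      ultimately show ?thesis using Dxi
        unfolding \<alpha>_def \<beta>_def \<gamma>_def by linarith
    qed
    have "\<bar>bernstein_kernel N A x y - K x y\<bar> = \<bar>\<Sum>i\<le>M. \<Sum>j\<le>N. (D i j - K x y) * (q i * p j)\<bar>"
      unfolding BK by (subst Kxy) (simp add: sum_subtractf[symmetric] left_diff_distrib)
    also have "\<dots> \<le> (\<Sum>i\<le>M. \<Sum>j\<le>N. \<bar>(D i j - K x y) * (q i * p j)\<bar>)"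
      by (rule order_trans[OF sum_abs sum_mono[OF sum_abs]])
    also have "\<dots> \<le> (\<Sum>i\<le>M. \<Sum>j\<le>N. (\<alpha> + \<beta> i + \<gamma> j) * (q i * p j))"
      by (intro sum_mono) (auto simp: abs_mult qn pn intro!: mult_right_mono pt)
    also have "\<dots> = \<alpha> + (\<Sum>i\<le>M. \<beta> i * q i) + (\<Sum>j\<le>N. \<gamma> j * p j)"
      unfolding sep_sum sq sp by simp
    also have "(\<Sum>i\<le>M. \<beta> i * q i) = 2 * C * (x * (1 - x) / real M)"
    proof -
      have "(\<Sum>i\<le>M. \<beta> i * q i) = 2 * C * (\<Sum>i\<le>M. (x - real i / real M)\<^sup>2 * bern M i x)"
        unfolding \<beta>_def q_def by (simp add: sum_distrib_left mult.assoc)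
      then show ?thesis using bern_moment[OF M1, of x] by simp
    qed
    also have "(\<Sum>j\<le>N. \<gamma> j * p j) = C * (y * (1 - y) / real N)"
    proof -
      have "(\<Sum>j\<le>N. \<gamma> j * p j) = C * (\<Sum>j\<le>N. (y - real j / real N)\<^sup>2 * bern N j y)"
        unfolding \<gamma>_def p_def by (simp add: sum_distrib_left mult.assoc)
      then show ?thesis using bern_moment[of N y] N2 by simp
    qed
    also have "\<alpha> + 2 * C * (x * (1 - x) / real M) + C * (y * (1 - y) / real N) \<le> e"
    proof -
      have x1: "x * (1 - x) \<le> 1" "y * (1 - y) \<le> 1" using x y by (auto intro: mult_le_one)
      have Mp: "real M > 0" using M1 by simp
      have NM: "real M \<le> real N" using RM by simp
      have t1: "x * (1 - x) / real M \<le> 1 / real M" using x1 Mp by (simp add: divide_right_mono)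
      have t2: "y * (1 - y) / real N \<le> 1 / real M"
        using x1 Mp NM by (meson divide_right_mono frac_le order_trans zero_le_one Mp less_imp_le)
      have t3: "2 / (real N)\<^sup>2 \<le> 2 / real M"
      proof -
        have "real N * 1 \<le> real N * real N" using N2 by (intro mult_left_mono) auto
        then have "real M \<le> (real N)\<^sup>2" using NM by (simp add: power2_eq_square)
        moreover have "0 < (real N)\<^sup>2 * real M" using Mp N2 by simp
        ultimately show ?thesis using Mp by (intro divide_left_mono) auto
      qed
      have "\<alpha> + 2 * C * (x * (1 - x) / real M) + C * (y * (1 - y) / real N)
          \<le> e/2 + C * (2 / real M) + 2 * C * (1 / real M) + C * (1 / real M)"
      proof -
        have "C * (2 / (real N)\<^sup>2) \<le> C * (2 / real M)" using t3 C by (intro mult_left_mono) auto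
        then have "2 * C / (real N)\<^sup>2 \<le> C * (2 / real M)" by (simp add: mult.commute)
        moreover have "2 * C * (x * (1 - x) / real M) \<le> 2 * C * (1 / real M)" using t1 C by (intro mult_left_mono) auto
        moreover have "C * (y * (1 - y) / real N) \<le> C * (1 / real M)" using t2 C by (intro mult_left_mono) auto
        ultimately show ?thesis unfolding \<alpha>_def by linarith
      qed
      also have "\<dots> = e/2 + 5 * C / real M" by (simp add: field_simps)
      also have "5 * C / real M \<le> e/2"
        using Mbig Mp e C by (simp add: field_simps)
      finally show ?thesis by simp
    qed
    finally show "\<bar>bernstein_kernel N A x y - K x y\<bar> \<le> e" .
  qed
qed

lemma rank_surj:
  fixes xs :: "nat \<Rightarrow> real"
  assumes inj: "inj_on xs {..<n}" and i: "i \<le> n"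
  shows "\<exists>x. card {k. k < n \<and> xs k \<le> x} = i"
proof (cases "i = 0")
  case True
  define x where "x = Min (insert 0 (xs ` {..<n})) - 1"
  have "{k. k < n \<and> xs k \<le> x} = {}"
  proof -
    have "xs k > x" if "k < n" for k
    proof -
      have "Min (insert 0 (xs ` {..<n})) \<le> xs k" by (rule Min_le) (use that in auto)
      then show ?thesis unfolding x_def by linarith
    qed
    then show ?thesis by force
  qed
  then show ?thesis using True by (intro exI[of _ x]) simp
next
  case False
  define r where "r k = card {l. l < n \<and> xs l \<le> xs k}" for k
  have fin: "finite {l. l < n \<and> P l}" for P by auto
  have r_range: "r ` {..<n} \<subseteq> {1..n}"
  proof
    fix m assume "m \<in> r ` {..<n}"
    then obtain k where k: "k < n" "m = r k" by auto
    have "k \<in> {l. l < n \<and> xs l \<le> xs k}" using k by auto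
    then have "r k \<ge> 1" unfolding r_def using fin by (metis card_0_eq empty_iff less_one not_le)
    moreover have "r k \<le> n" unfolding r_def
      by (rule order_trans[OF card_mono[of "{..<n}"]]) auto
    ultimately show "m \<in> {1..n}" using k by auto
  qed
  have r_lt: "r k < r k'" if "k < n" "k' < n" "xs k < xs k'" for k k'
  proof -
    have sub: "{l. l < n \<and> xs l \<le> xs k} \<subseteq> {l. l < n \<and> xs l \<le> xs k'}"
      using that by auto
    have "k' \<in> {l. l < n \<and> xs l \<le> xs k'}" "k' \<notin> {l. l < n \<and> xs l \<le> xs k}"
      using that by auto
    then have "{l. l < n \<and> xs l \<le> xs k} \<subset> {l. l < n \<and> xs l \<le> xs k'}"
      using sub by blast
    then show ?thesis unfolding r_def by (rule psubset_card_mono[OF fin])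
  qed
  have "inj_on r {..<n}"
  proof (rule inj_onI)
    fix k k' assume k: "k \<in> {..<n}" "k' \<in> {..<n}" "r k = r k'"
    show "k = k'"
    proof (rule ccontr)
      assume "k \<noteq> k'"
      then have "xs k \<noteq> xs k'" using inj k by (auto dest: inj_onD)
      then show False using r_lt[of k k'] r_lt[of k' k] k by (cases "xs k < xs k'") auto
    qed
  qed
  then have "card (r ` {..<n}) = n" by (simp add: card_image)
  then have "r ` {..<n} = {1..n}" using r_range by (intro card_subset_eq) auto
  then have "i \<in> r ` {..<n}" using i False by auto
  then obtain k where "r k = i" by auto
  then show ?thesis unfolding r_def by blast
qed

lemma same_count:
  fixes xs :: "nat \<Rightarrow> real"
  assumes "card {k. k < n \<and> xs k \<le> x} = card {k. k < n \<and> xs k \<le> x'}"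
  shows "{k. k < n \<and> xs k \<le> x} = {k. k < n \<and> xs k \<le> x'}"
proof (cases "x \<le> x'")
  case True
  have "{k. k < n \<and> xs k \<le> x} \<subseteq> {k. k < n \<and> xs k \<le> x'}" using True by auto
  then show ?thesis using assms by (intro card_subset_eq) auto
next
  case False
  have "{k. k < n \<and> xs k \<le> x'} \<subseteq> {k. k < n \<and> xs k \<le> x}" using False by auto
  then show ?thesis using assms by (intro card_subset_eq[symmetric]) auto
qed

lemma emp_df_eq_card:
  assumes "n \<ge> 1" "emp_df n xs x = emp_df n xs x'"
  shows "{k. k < n \<and> xs k \<le> x} = {k. k < n \<and> xs k \<le> x'}"
  using assms by (intro same_count) (auto simp: emp_df_def)

lemma emp_joint_df_eq:
  assumes "n \<ge> 1" "emp_df n xs x = emp_df n xs x'" "emp_df n ys y = emp_df n ys y'"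
  shows "emp_joint_df n xs ys x y = emp_joint_df n xs ys x' y'"
proof -
  have "{k. k < n \<and> xs k \<le> x \<and> ys k \<le> y} = {k. k < n \<and> xs k \<le> x} \<inter> {k. k < n \<and> ys k \<le> y}"
       "{k. k < n \<and> xs k \<le> x' \<and> ys k \<le> y'} = {k. k < n \<and> xs k \<le> x'} \<inter> {k. k < n \<and> ys k \<le> y'}"
    by auto
  then show ?thesis
    using emp_df_eq_card[OF assms(1,2)] emp_df_eq_card[OF assms(1,3)]
    unfolding emp_joint_df_def by simp
qed

lemma emp_df_grid: "emp_df n xs x \<in> grid n"
proof -
  have "card {k. k < n \<and> xs k \<le> x} \<le> n"
    by (rule order_trans[OF card_mono[of "{..<n}"]]) auto
  then show ?thesis unfolding emp_df_def grid_def by blast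
qed

lemma emp_df_surj:
  assumes "inj_on xs {..<n}" "i \<le> n"
  shows "\<exists>x. emp_df n xs x = real i / real n"
  using rank_surj[OF assms] unfolding emp_df_def by metis

lemma emp_subcopula_prop:
  assumes n: "n \<ge> 1" and ix: "inj_on xs {..<n}" and iy: "inj_on ys {..<n}"
  shows "\<forall>x y. emp_joint_df n xs ys x y = emp_subcopula n xs ys (emp_df n xs x) (emp_df n ys y)"
proof -
  define P where "P S \<longleftrightarrow> (\<forall>x y. emp_joint_df n xs ys x y = S (emp_df n xs x) (emp_df n ys y)) \<and>
      (\<forall>u v. (u,v) \<notin> grid n \<times> grid n \<longrightarrow> S u v = 0)" for S :: "real \<Rightarrow> real \<Rightarrow> real"
  define S0 where "S0 u v = (if u \<in> grid n \<and> v \<in> grid n then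
      emp_joint_df n xs ys (SOME x. emp_df n xs x = u) (SOME y. emp_df n ys y = v) else 0)" for u v
  have "P S0"
    unfolding P_def
  proof (intro conjI allI impI)
    fix x y
    have sx: "emp_df n xs (SOME x'. emp_df n xs x' = emp_df n xs x) = emp_df n xs x"
      by (rule someI[of _ x]) simp
    have sy: "emp_df n ys (SOME y'. emp_df n ys y' = emp_df n ys y) = emp_df n ys y"
      by (rule someI[of _ y]) simp
    show "emp_joint_df n xs ys x y = S0 (emp_df n xs x) (emp_df n ys y)"
      unfolding S0_def using emp_df_grid[of n xs x] emp_df_grid[of n ys y]
      using emp_joint_df_eq[OF n sx[symmetric] sy[symmetric]] by simp
  next
    fix u v assume "(u, v) \<notin> grid n \<times> grid n"
    then show "S0 u v = 0" unfolding S0_def by auto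
  qed
  moreover have uniq: "S = S'" if "P S" "P S'" for S S'
  proof (intro ext)
    fix u v
    show "S u v = S' u v"
    proof (cases "u \<in> grid n \<and> v \<in> grid n")
      case True
      then obtain i j where ij: "i \<le> n" "j \<le> n" "u = real i / real n" "v = real j / real n"
        unfolding grid_def by auto
      obtain x where x: "emp_df n xs x = u" using emp_df_surj[OF ix ij(1)] ij by auto
      obtain y where y: "emp_df n ys y = v" using emp_df_surj[OF iy ij(2)] ij by auto
      have "emp_joint_df n xs ys x y = S (emp_df n xs x) (emp_df n ys y)" using that(1) unfolding P_def by simp
      moreover have "emp_joint_df n xs ys x y = S' (emp_df n xs x) (emp_df n ys y)" using that(2) unfolding P_def by simp
      ultimately show ?thesis using x y by simp
    next
      case False
      then have "(u, v) \<notin> grid n \<times> grid n" by auto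
      then show ?thesis using that unfolding P_def by simp
    qed
  qed
  ultimately have "\<exists>!S. P S" by (metis)
  then have "P (THE S. P S)" by (rule theI')
  moreover have "(THE S. P S) = emp_subcopula n xs ys"
    unfolding emp_subcopula_def P_def by (rule refl)
  ultimately have "P (emp_subcopula n xs ys)" by simp
  then show ?thesis unfolding P_def by (rule conjunct1)
qed

lemma convex4_bound:
  fixes a b s1 s2 s3 s4 z d :: real
  assumes "0 \<le> a" "a \<le> 1" "0 \<le> b" "b \<le> 1"
    "\<bar>s1 - z\<bar> \<le> d" "\<bar>s2 - z\<bar> \<le> d" "\<bar>s3 - z\<bar> \<le> d" "\<bar>s4 - z\<bar> \<le> d"
  shows "\<bar>(1 - a) * (1 - b) * s1 + a * (1 - b) * s2 + (1 - a) * b * s3 + a * b * s4 - z\<bar> \<le> d"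
proof -
  have w: "0 \<le> (1 - a) * (1 - b)" "0 \<le> a * (1 - b)" "0 \<le> (1 - a) * b" "0 \<le> a * b"
    using assms by auto
  have wb: "\<And>w s. 0 \<le> w \<Longrightarrow> \<bar>s\<bar> \<le> d \<Longrightarrow> \<bar>w * s\<bar> \<le> w * d"
    by (simp add: abs_mult mult_left_mono)
  have eq: "(1 - a) * (1 - b) * s1 + a * (1 - b) * s2 + (1 - a) * b * s3 + a * b * s4 - z
      = (1 - a) * (1 - b) * (s1 - z) + a * (1 - b) * (s2 - z) + (1 - a) * b * (s3 - z) + a * b * (s4 - z)"
    by (simp add: algebra_simps)
  have "\<bar>(1 - a) * (1 - b) * (s1 - z)\<bar> \<le> (1 - a) * (1 - b) * d"
       "\<bar>a * (1 - b) * (s2 - z)\<bar> \<le> a * (1 - b) * d"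
       "\<bar>(1 - a) * b * (s3 - z)\<bar> \<le> (1 - a) * b * d"
       "\<bar>a * b * (s4 - z)\<bar> \<le> a * b * d"
    using wb[OF w(1) assms(5)] wb[OF w(2) assms(6)] wb[OF w(3) assms(7)] wb[OF w(4) assms(8)] by auto
  moreover have "(1 - a) * (1 - b) * d + a * (1 - b) * d + (1 - a) * b * d + a * b * d = d"
    by (simp add: algebra_simps)
  ultimately show ?thesis unfolding eq by linarith
qed

lemma emp_copula_close:
  fixes xs ys :: "nat \<Rightarrow> real" and F G :: "real \<Rightarrow> real"
  assumes A: "is_copula A" and n: "n \<ge> 1" and ix: "inj_on xs {..<n}" and iy: "inj_on ys {..<n}"
    and F01: "\<And>x. F x \<in> {0..1}" and G01: "\<And>y. G y \<in> {0..1}"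
    and H: "\<And>x y. \<bar>emp_joint_df n xs ys x y - A (F x) (G y)\<bar> \<le> t"
    and Fb: "\<And>x. \<bar>emp_df n xs x - F x\<bar> \<le> t" and Gb: "\<And>y. \<bar>emp_df n ys y - G y\<bar> \<le> t"
    and u: "u \<in> {0..1}" and v: "v \<in> {0..1}"
  shows "\<bar>emp_copula n xs ys u v - A u v\<bar> \<le> 3 * t + 2 / real n"
proof -
  define S where "S = emp_subcopula n xs ys"
  have Sp: "\<And>x y. emp_joint_df n xs ys x y = S (emp_df n xs x) (emp_df n ys y)"
    using emp_subcopula_prop[OF n ix iy] by (simp add: S_def)
  have np: "real n > 0" using n by simp
  have gridval: "\<bar>S (real i / real n) (real j / real n) - A u v\<bar> \<le> 3 * t + 2 / real n"
    if ij: "i \<le> n" "j \<le> n" "\<bar>real i / real n - u\<bar> \<le> 1 / real n" "\<bar>real j / real n - v\<bar> \<le> 1 / real n" for i j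
  proof -
    obtain x where x: "emp_df n xs x = real i / real n" using emp_df_surj[OF ix ij(1)] by auto
    obtain y where y: "emp_df n ys y = real j / real n" using emp_df_surj[OF iy ij(2)] by auto
    have i01: "real i / real n \<in> {0..1}" "real j / real n \<in> {0..1}" using ij np by auto
    have "S (real i / real n) (real j / real n) = emp_joint_df n xs ys x y" using Sp x y by simp
    moreover have "\<bar>emp_joint_df n xs ys x y - A (F x) (G y)\<bar> \<le> t" by (rule H)
    moreover have "\<bar>A (F x) (G y) - A (real i / real n) (real j / real n)\<bar> \<le> \<bar>F x - real i / real n\<bar> + \<bar>G y - real j / real n\<bar>"
      by (rule copula_lip[OF A F01 i01(1) G01 i01(2)])
    moreover have "\<bar>A (real i / real n) (real j / real n) - A u v\<bar> \<le> \<bar>real i / real n - u\<bar> + \<bar>real j / real n - v\<bar>"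
      by (rule copula_lip[OF A i01(1) u i01(2) v])
    moreover have "\<bar>F x - real i / real n\<bar> \<le> t" using Fb[of x] x by (simp add: abs_minus_commute)
    moreover have "\<bar>G y - real j / real n\<bar> \<le> t" using Gb[of y] y by (simp add: abs_minus_commute)
    ultimately show ?thesis using ij(3,4) by linarith
  qed
  have ax: "\<exists>i. i \<le> n - 1 \<and> min (n - 1) (nat \<lfloor>real n * w\<rfloor>) = i \<and> 0 \<le> real n * w - real i \<and> real n * w - real i \<le> 1
            \<and> \<bar>real i / real n - w\<bar> \<le> 1 / real n \<and> \<bar>real (i + 1) / real n - w\<bar> \<le> 1 / real n"
    if w: "w \<in> {0..1}" for w
  proof -
    define i where "i = min (n - 1) (nat \<lfloor>real n * w\<rfloor>)"
    have nw: "0 \<le> real n * w" "real n * w \<le> real n" using w np by auto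
    have i1: "real i \<le> real n * w"
    proof -
      have "real i \<le> real (nat \<lfloor>real n * w\<rfloor>)" unfolding i_def by simp
      also have "\<dots> \<le> real n * w" using nw by linarith
      finally show ?thesis .
    qed
    have i2: "real n * w - real i \<le> 1"
    proof (cases "nat \<lfloor>real n * w\<rfloor> \<le> n - 1")
      case True
      then have "i = nat \<lfloor>real n * w\<rfloor>" unfolding i_def by simp
      then show ?thesis using nw by linarith
    next
      case False
      then have "i = n - 1" unfolding i_def by simp
      then show ?thesis using nw n by auto
    qed
    have in1: "i \<le> n - 1" unfolding i_def by simp
    have e1: "real i / real n - w = - ((real n * w - real i) / real n)" using np by (simp add: field_simps)
    have e2: "real (i + 1) / real n - w = (1 - (real n * w - real i)) / real n" using np by (simp add: field_simps)
    have "\<bar>(real n * w - real i) / real n\<bar> \<le> 1 / real n" using i1 i2 np by (simp add: divide_right_mono)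
    moreover have "\<bar>(1 - (real n * w - real i)) / real n\<bar> \<le> 1 / real n" using i1 i2 np by (simp add: divide_right_mono)
    ultimately show ?thesis using i1 i2 in1 e1 e2 by (intro exI[of _ i]) (auto simp: i_def)
  qed
  obtain i where i: "i \<le> n - 1" "min (n - 1) (nat \<lfloor>real n * u\<rfloor>) = i" "0 \<le> real n * u - real i" "real n * u - real i \<le> 1"
     "\<bar>real i / real n - u\<bar> \<le> 1 / real n" "\<bar>real (i + 1) / real n - u\<bar> \<le> 1 / real n"
    using ax[OF u] by blast
  obtain j where j: "j \<le> n - 1" "min (n - 1) (nat \<lfloor>real n * v\<rfloor>) = j" "0 \<le> real n * v - real j" "real n * v - real j \<le> 1"
     "\<bar>real j / real n - v\<bar> \<le> 1 / real n" "\<bar>real (j + 1) / real n - v\<bar> \<le> 1 / real n"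
    using ax[OF v] by blast
  have i1: "i + 1 \<le> n" "i \<le> n" using i(1) n by auto
  have j1: "j + 1 \<le> n" "j \<le> n" using j(1) n by auto
  have "emp_copula n xs ys u v =
      (1 - (real n * u - real i)) * (1 - (real n * v - real j)) * S (real i / real n) (real j / real n)
    + (real n * u - real i) * (1 - (real n * v - real j)) * S (real (i + 1) / real n) (real j / real n)
    + (1 - (real n * u - real i)) * (real n * v - real j) * S (real i / real n) (real (j + 1) / real n)
    + (real n * u - real i) * (real n * v - real j) * S (real (i + 1) / real n) (real (j + 1) / real n)"
    unfolding emp_copula_def Let_def S_def i(2) j(2) by simp
  also have "\<bar>\<dots> - A u v\<bar> \<le> 3 * t + 2 / real n"
    by (rule convex4_bound[OF i(3,4) j(3,4)])
       (rule gridval; (rule i1 j1 i j)?)+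
  finally show ?thesis .
qed

lemma (in prob_space) atom_zero:
  fixes U V :: "'a \<Rightarrow> real"
  assumes U: "random_variable borel U" and V: "random_variable borel V"
    and c: "continuous_on UNIV (\<lambda>(x,y). prob {\<omega>\<in>space M. U \<omega> \<le> x \<and> V \<omega> \<le> y})"
  shows "prob {\<omega>\<in>space M. U \<omega> = x} = 0"
proof -
  define Hf where "Hf a b = prob {\<omega>\<in>space M. U \<omega> \<le> a \<and> V \<omega> \<le> b}" for a b
  define B where "B m = {\<omega>\<in>space M. U \<omega> = x \<and> V \<omega> \<le> real m}" for m :: nat
  have Bm: "B m \<in> sets M" for m unfolding B_def using U V by measurable
  have null: "B m \<in> null_sets M" for m
  proof -
    have le: "prob (B m) \<le> Hf x (real m) - Hf (x - inverse (real (Suc j))) (real m)" for j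
    proof -
      define S1 where "S1 = {\<omega>\<in>space M. U \<omega> \<le> x \<and> V \<omega> \<le> real m}"
      define \<epsilon> where "\<epsilon> = inverse (real (Suc j))"
      define S2 where "S2 = {\<omega>\<in>space M. U \<omega> \<le> x - \<epsilon> \<and> V \<omega> \<le> real m}"
      have s: "S1 \<in> sets M" "S2 \<in> sets M" unfolding S1_def S2_def using U V by measurable
      have ip: "\<epsilon> > 0" by (simp add: \<epsilon>_def)
      have sub: "S2 \<subseteq> S1" unfolding S1_def S2_def using ip by auto
      have "B m \<subseteq> S1 - S2" unfolding B_def S1_def S2_def using ip by auto
      then have "prob (B m) \<le> prob (S1 - S2)" using s by (intro finite_measure_mono) auto
      also have "\<dots> = prob S1 - prob S2" using s sub by (rule finite_measure_Diff)
      finally show ?thesis unfolding Hf_def S1_def S2_def \<epsilon>_def .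
    qed
    have ic: "isCont (\<lambda>(a,b). Hf a b) (x, real m)"
      using c unfolding Hf_def by (simp add: continuous_on_eq_continuous_at)
    have "(\<lambda>j. (x - inverse (real (Suc j)), real m)) \<longlonglongrightarrow> (x, real m)"
      using LIMSEQ_inverse_real_of_nat_add_minus[of x] by (intro tendsto_Pair) auto
    from isCont_tendsto_compose[OF ic this]
    have "(\<lambda>j. Hf (x - inverse (real (Suc j))) (real m)) \<longlonglongrightarrow> Hf x (real m)" by simp
    then have "(\<lambda>j. Hf x (real m) - Hf (x - inverse (real (Suc j))) (real m)) \<longlonglongrightarrow> Hf x (real m) - Hf x (real m)"
      by (intro tendsto_diff tendsto_const)
    then have "prob (B m) \<le> 0" using le by (intro LIMSEQ_le_const[where a="prob (B m)"]) auto
    then have "prob (B m) = 0" using measure_nonneg[of M "B m"] by linarith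
    then show ?thesis using Bm by (simp add: emeasure_eq_measure null_sets_def)
  qed
  have "{\<omega>\<in>space M. U \<omega> = x} = (\<Union>m. B m)"
  proof
    show "{\<omega> \<in> space M. U \<omega> = x} \<subseteq> \<Union> (range B)"
    proof
      fix \<omega> assume "\<omega> \<in> {\<omega> \<in> space M. U \<omega> = x}"
      moreover obtain m where "V \<omega> \<le> real m" using real_arch_simple by blast
      ultimately show "\<omega> \<in> \<Union> (range B)" unfolding B_def by auto
    qed
  qed (auto simp: B_def)
  moreover have "(\<Union>m. B m) \<in> null_sets M" by (rule null_sets_UN[OF null])
  ultimately show ?thesis by (simp add: measure_eq_0_null_sets)
qed

lemma (in prob_space) cdf_props:
  fixes U :: "'a \<Rightarrow> real"
  assumes U: "random_variable borel U" and at: "\<And>x. prob {\<omega>\<in>space M. U \<omega> = x} = 0"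
  defines "F \<equiv> \<lambda>x. prob {\<omega>\<in>space M. U \<omega> \<le> x}"
  shows "continuous_on UNIV F" "(F \<longlongrightarrow> 0) at_bot" "(F \<longlongrightarrow> 1) at_top" "mono F"
proof -
  interpret D: real_distribution "distr M borel U" using U by (rule real_distribution_distr)
  have eq: "F = cdf (distr M borel U)"
  proof
    fix x
    have "U -` {..x} \<inter> space M = {\<omega>\<in>space M. U \<omega> \<le> x}" by auto
    then show "F x = cdf (distr M borel U) x"
      unfolding cdf_def F_def using U by (simp add: measure_distr)
  qed
  have "isCont F x" for x
  proof -
    have "U -` {x} \<inter> space M = {\<omega>\<in>space M. U \<omega> = x}" by auto
    then have "measure (distr M borel U) {x} = 0" using U at by (simp add: measure_distr)
    then show ?thesis unfolding eq by (simp add: D.isCont_cdf)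
  qed
  then show "continuous_on UNIV F" by (simp add: continuous_on_eq_continuous_at)
  show "(F \<longlongrightarrow> 0) at_bot" unfolding eq by (rule D.cdf_lim_at_bot)
  show "(F \<longlongrightarrow> 1) at_top" unfolding eq by (rule D.cdf_lim_at_top_prob)
  show "mono F" unfolding eq by (auto intro: monoI D.cdf_nondecreasing)
qed

lemma quantile_exists:
  fixes F :: "real \<Rightarrow> real"
  assumes c: "continuous_on UNIV F" and l0: "(F \<longlongrightarrow> 0) at_bot" and l1: "(F \<longlongrightarrow> 1) at_top"
    and m: "mono F" and p: "0 < p" "p < 1"
  shows "\<exists>c. F c = p"
proof -
  have "eventually (\<lambda>x. F x < p) at_bot" using order_tendstoD(2)[OF l0] p by auto
  then obtain a where a: "F a < p" by (auto simp: eventually_at_bot_linorder)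
  have "eventually (\<lambda>x. F x > p) at_top" using order_tendstoD(1)[OF l1] p by auto
  then obtain b where b: "F b > p" by (auto simp: eventually_at_top_linorder)
  have ab: "a \<le> b"
  proof (rule ccontr)
    assume "\<not> a \<le> b"
    then have "F b \<le> F a" using m by (auto simp: mono_def)
    then show False using a b by linarith
  qed
  have "continuous_on {a..b} F" using c by (rule continuous_on_subset) auto
  from IVT'[of F a p b, OF _ _ ab this] a b show ?thesis by auto
qed

definition qpt :: "(real \<Rightarrow> real) \<Rightarrow> nat \<Rightarrow> nat \<Rightarrow> real" where
  "qpt F n q = (SOME c. F c = real q / real n)"

definition qset :: "(real \<Rightarrow> real) \<Rightarrow> nat \<Rightarrow> nat \<Rightarrow> real set" where
  "qset F n q = (if q = 0 then {} else if n \<le> q then UNIV else {..qpt F n q})"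

lemma qset_borel: "qset F n q \<in> sets borel"
  by (auto simp: qset_def)

locale qf =
  fixes F :: "real \<Rightarrow> real"
  assumes quant: "\<And>p. 0 < p \<Longrightarrow> p < 1 \<Longrightarrow> \<exists>c. F c = p"
    and monoF: "mono F"
begin

lemma qpt_val: "0 < q \<Longrightarrow> q < n \<Longrightarrow> F (qpt F n q) = real q / real n"
  unfolding qpt_def by (rule someI_ex, rule quant) auto

lemma qpt_mono: "0 < q \<Longrightarrow> Suc q < n \<Longrightarrow> qpt F n q < qpt F n (Suc q)"
proof (rule ccontr)
  assume q: "0 < q" "Suc q < n" and "\<not> qpt F n q < qpt F n (Suc q)"
  then have "F (qpt F n (Suc q)) \<le> F (qpt F n q)" using monoF by (auto simp: mono_def)
  then have "real (Suc q) / real n \<le> real q / real n" using qpt_val[of q n] qpt_val[of "Suc q" n] q by simp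
  then show False using q by (simp add: divide_right_mono_neg divide_le_cancel)
qed

lemma qset_nested: "qset F n q \<subseteq> qset F n (Suc q)"
  unfolding qset_def using qpt_mono[of q n] by auto

lemma qset_cover:
  assumes n: "n \<ge> 1"
  shows "\<exists>q<n. z \<in> qset F n (Suc q) \<and> z \<notin> qset F n q"
proof -
  define Q where "Q = {q. q < n \<and> (q = 0 \<or> qpt F n q < z)}"
  have fin: "finite Q" unfolding Q_def by auto
  have ne: "0 \<in> Q" unfolding Q_def using n by auto
  define q where "q = Max Q"
  have qQ: "q \<in> Q" unfolding q_def using fin ne by (intro Max_in) auto
  have qmax: "q' \<le> q" if "q' \<in> Q" for q' unfolding q_def using fin that by auto
  have "z \<notin> qset F n q" using qQ unfolding Q_def qset_def by auto
  moreover have "z \<in> qset F n (Suc q)"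
  proof (cases "n \<le> Suc q")
    case True then show ?thesis by (simp add: qset_def)
  next
    case False
    then have "Suc q \<notin> Q" using qmax by fastforce
    then have "\<not> qpt F n (Suc q) < z" using False unfolding Q_def by auto
    then show ?thesis using False by (simp add: qset_def)
  qed
  ultimately show ?thesis using qQ unfolding Q_def by auto
qed

lemma qset_sandwich:
  assumes n: "n \<ge> 1" and I: "I = UNIV \<or> (\<exists>x. I = {..x})"
  shows "\<exists>q<n. qset F n q \<subseteq> I \<and> I \<subseteq> qset F n (Suc q)"
proof (cases "I = UNIV")
  case True
  then show ?thesis using n by (intro exI[of _ "n - 1"]) (auto simp: qset_def)
next
  case False
  then obtain x where x: "I = {..x}" using I by auto
  obtain q where q: "q < n" "x \<in> qset F n (Suc q)" "x \<notin> qset F n q" using qset_cover[OF n] by blast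
  have "qset F n q \<subseteq> {..x}"
    using q unfolding qset_def by (auto split: if_splits)
  moreover have "{..x} \<subseteq> qset F n (Suc q)"
    using q unfolding qset_def by (auto split: if_splits)
  ultimately show ?thesis using q x by auto
qed

end

lemma (in prob_space) qset_prob:
  fixes U :: "'a \<Rightarrow> real"
  assumes U: "random_variable borel U" and n: "n \<ge> 1" and q: "q \<le> n"
    and qf: "qf (\<lambda>x. prob {\<omega>\<in>space M. U \<omega> \<le> x})"
  shows "prob {\<omega>\<in>space M. U \<omega> \<in> qset (\<lambda>x. prob {\<omega>\<in>space M. U \<omega> \<le> x}) n q} = real q / real n"
proof -
  interpret qf "(\<lambda>x. prob {\<omega>\<in>space M. U \<omega> \<le> x})" using qf .
  show ?thesis
  proof (cases "q = 0")
    case True then show ?thesis by (simp add: qset_def)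
  next
    case False
    show ?thesis
    proof (cases "n \<le> q")
      case True
      then have "q = n" using q by simp
      then show ?thesis using False n prob_space by (simp add: qset_def)
    next
      case nq: False
      then show ?thesis using False qpt_val[of q n] by (simp add: qset_def)
    qed
  qed
qed

locale cs = prob_space M for M :: "'a measure" +
  fixes X Y :: "'a \<Rightarrow> real" and Xs Ys :: "nat \<Rightarrow> 'a \<Rightarrow> real"
  assumes XY_meas: "(\<lambda>\<omega>. (X \<omega>, Y \<omega>)) \<in> borel_measurable M"
    and indep: "indep_vars (\<lambda>_. borel) (\<lambda>i \<omega>. (Xs i \<omega>, Ys i \<omega>)) UNIV"
    and distr_eq: "\<And>i. distr M borel (\<lambda>\<omega>. (Xs i \<omega>, Ys i \<omega>)) = distr M borel (\<lambda>\<omega>. (X \<omega>, Y \<omega>))"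
    and H_cont: "continuous_on UNIV (\<lambda>(x,y). measure M {\<omega>\<in>space M. X \<omega> \<le> x \<and> Y \<omega> \<le> y})"
begin

lemma fst_meas: "fst \<in> borel_measurable (borel :: (real \<times> real) measure)"
  using measurable_fst[of "borel :: real measure" "borel :: real measure"] by (simp add: borel_prod)
lemma snd_meas: "snd \<in> borel_measurable (borel :: (real \<times> real) measure)"
  using measurable_snd[of "borel :: real measure" "borel :: real measure"] by (simp add: borel_prod)

lemma X_meas[measurable]: "X \<in> borel_measurable M"
  using measurable_compose[OF XY_meas fst_meas] by simp
lemma Y_meas[measurable]: "Y \<in> borel_measurable M"
  using measurable_compose[OF XY_meas snd_meas] by simp
lemma Z_meas: "(\<lambda>\<omega>. (Xs i \<omega>, Ys i \<omega>)) \<in> borel_measurable M"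
  using indep unfolding indep_vars_def by auto
lemma Xs_meas[measurable]: "Xs i \<in> borel_measurable M"
  using measurable_compose[OF Z_meas fst_meas] by simp
lemma Ys_meas[measurable]: "Ys i \<in> borel_measurable M"
  using measurable_compose[OF Z_meas snd_meas] by simp

lemma prob_Z:
  assumes B: "B \<in> sets borel"
  shows "prob {\<omega>\<in>space M. (Xs i \<omega>, Ys i \<omega>) \<in> B} = prob {\<omega>\<in>space M. (X \<omega>, Y \<omega>) \<in> B}"
proof -
  have "prob {\<omega>\<in>space M. (Xs i \<omega>, Ys i \<omega>) \<in> B} = measure (distr M borel (\<lambda>\<omega>. (Xs i \<omega>, Ys i \<omega>))) B"
    using B Z_meas by (subst measure_distr) (auto intro!: arg_cong[where f=prob])
  also have "\<dots> = measure (distr M borel (\<lambda>\<omega>. (X \<omega>, Y \<omega>))) B" by (simp add: distr_eq)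
  also have "\<dots> = prob {\<omega>\<in>space M. (X \<omega>, Y \<omega>) \<in> B}"
    using B XY_meas by (subst measure_distr) (auto intro!: arg_cong[where f=prob])
  finally show ?thesis .
qed

lemma X_atom: "prob {\<omega>\<in>space M. X \<omega> = x} = 0"
  by (rule atom_zero[OF X_meas Y_meas H_cont])

lemma Y_atom: "prob {\<omega>\<in>space M. Y \<omega> = y} = 0"
proof -
  have "continuous_on UNIV ((\<lambda>(x,y). measure M {\<omega>\<in>space M. X \<omega> \<le> x \<and> Y \<omega> \<le> y}) \<circ> (\<lambda>p. (snd p, fst p)))"
    by (rule continuous_on_compose[OF _ continuous_on_subset[OF H_cont]]) (auto intro!: continuous_intros)
  moreover have "((\<lambda>(x,y). measure M {\<omega>\<in>space M. X \<omega> \<le> x \<and> Y \<omega> \<le> y}) \<circ> (\<lambda>p. (snd p, fst p)))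
      = (\<lambda>(x,y). prob {\<omega>\<in>space M. Y \<omega> \<le> x \<and> X \<omega> \<le> y})"
    by (auto simp: conj_commute)
  ultimately show ?thesis using atom_zero[OF Y_meas X_meas] by simp
qed

definition "F x = prob {\<omega>\<in>space M. X \<omega> \<le> x}"
definition "G y = prob {\<omega>\<in>space M. Y \<omega> \<le> y}"

lemma F_props: "continuous_on UNIV F" "(F \<longlongrightarrow> 0) at_bot" "(F \<longlongrightarrow> 1) at_top" "mono F"
  using cdf_props[OF X_meas X_atom] unfolding F_def by auto
lemma G_props: "continuous_on UNIV G" "(G \<longlongrightarrow> 0) at_bot" "(G \<longlongrightarrow> 1) at_top" "mono G"
  using cdf_props[OF Y_meas Y_atom] unfolding G_def by auto

lemma qfF: "qf F"
  using quantile_exists[OF F_props(1-4)] F_props(4) by unfold_locales auto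
lemma qfG: "qf G"
  using quantile_exists[OF G_props(1-4)] G_props(4) by unfold_locales auto

lemma F01: "F x \<in> {0..1}" unfolding F_def by auto
lemma G01: "G y \<in> {0..1}" unfolding G_def by auto

lemma probX_qset: "n \<ge> 1 \<Longrightarrow> q \<le> n \<Longrightarrow> prob {\<omega>\<in>space M. X \<omega> \<in> qset F n q} = real q / real n"
  using qset_prob[OF X_meas, of n q] qfF unfolding F_def by auto
lemma probY_qset: "n \<ge> 1 \<Longrightarrow> q \<le> n \<Longrightarrow> prob {\<omega>\<in>space M. Y \<omega> \<in> qset G n q} = real q / real n"
  using qset_prob[OF Y_meas, of n q] qfG unfolding G_def by auto

lemma Xs_prob: "B \<in> sets borel \<Longrightarrow> prob {\<omega>\<in>space M. Xs i \<omega> \<in> B} = prob {\<omega>\<in>space M. X \<omega> \<in> B}"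
proof -
  assume B: "B \<in> sets borel"
  have "B \<times> (UNIV::real set) \<in> sets (borel \<Otimes>\<^sub>M borel)" using B by (intro pair_measureI) auto
  then have "B \<times> (UNIV::real set) \<in> sets borel" unfolding borel_prod .
  then show ?thesis using prob_Z[of "B \<times> UNIV" i] by simp
qed

lemma no_tie:
  assumes kl: "k \<noteq> l"
  shows "prob {\<omega>\<in>space M. Xs k \<omega> = Xs l \<omega>} = 0"
proof -
  have le: "prob {\<omega>\<in>space M. Xs k \<omega> = Xs l \<omega>} \<le> 1 / real n" if n: "n \<ge> 1" for n
  proof -
    define C where "C q = qset F n (Suc q) - qset F n q" for q
    have Cb: "C q \<in> sets borel" for q unfolding C_def by (intro sets.Diff qset_borel)
    define E where "E q = {\<omega>\<in>space M. Xs k \<omega> \<in> C q \<and> Xs l \<omega> \<in> C q}" for q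
    have Es: "E q \<in> sets M" for q unfolding E_def using Cb by measurable
    have sub: "{\<omega>\<in>space M. Xs k \<omega> = Xs l \<omega>} \<subseteq> (\<Union>q\<in>{..<n}. E q)"
    proof
      fix \<omega> assume \<omega>: "\<omega> \<in> {\<omega>\<in>space M. Xs k \<omega> = Xs l \<omega>}"
      obtain q where "q < n" "Xs k \<omega> \<in> qset F n (Suc q)" "Xs k \<omega> \<notin> qset F n q"
        using qf.qset_cover[OF qfF n] by blast
      then show "\<omega> \<in> (\<Union>q\<in>{..<n}. E q)" using \<omega> unfolding E_def C_def by auto
    qed
    have pC: "prob {\<omega>\<in>space M. X \<omega> \<in> C q} = 1 / real n" if q: "q < n" for q
    proof -
      have "{\<omega>\<in>space M. X \<omega> \<in> C q} = {\<omega>\<in>space M. X \<omega> \<in> qset F n (Suc q)} - {\<omega>\<in>space M. X \<omega> \<in> qset F n q}"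
        unfolding C_def by auto
      also have "prob \<dots> = prob {\<omega>\<in>space M. X \<omega> \<in> qset F n (Suc q)} - prob {\<omega>\<in>space M. X \<omega> \<in> qset F n q}"
        using qf.qset_nested[OF qfF, of n q] qset_borel by (intro finite_measure_Diff) (measurable, auto)
      also have "\<dots> = 1 / real n"
        using probX_qset[OF n, of "Suc q"] probX_qset[OF n, of q] q n by (simp add: field_simps)
      finally show ?thesis .
    qed
    have pE: "prob (E q) = (1 / real n)\<^sup>2" if q: "q < n" for q
    proof -
      define Z where "Z i \<omega> = (Xs i \<omega>, Ys i \<omega>)" for i \<omega>
      have "prob (\<Inter>i\<in>{k,l}. Z i -` (C q \<times> UNIV) \<inter> space M) = (\<Prod>i\<in>{k,l}. prob (Z i -` (C q \<times> UNIV) \<inter> space M))"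
        by (rule indep_varsD[OF indep[folded Z_def]]) (auto simp: Cb borel_prod[symmetric])
      moreover have "(\<Inter>i\<in>{k,l}. Z i -` (C q \<times> UNIV) \<inter> space M) = E q"
        unfolding E_def Z_def by auto
      moreover have "prob (Z i -` (C q \<times> UNIV) \<inter> space M) = 1 / real n" for i
      proof -
        have "Z i -` (C q \<times> UNIV) \<inter> space M = {\<omega>\<in>space M. Xs i \<omega> \<in> C q}" unfolding Z_def by auto
        then show ?thesis using Xs_prob[OF Cb, of i] pC[OF q] by simp
      qed
      ultimately show ?thesis using kl by (simp add: power2_eq_square)
    qed
    have "prob {\<omega>\<in>space M. Xs k \<omega> = Xs l \<omega>} \<le> prob (\<Union>q\<in>{..<n}. E q)"
      using sub Es by (intro finite_measure_mono) auto
    also have "\<dots> \<le> (\<Sum>q<n. prob (E q))" using Es by (intro measure_UNION_le) auto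
    also have "\<dots> = real n * (1 / real n)\<^sup>2" using pE by simp
    also have "\<dots> = 1 / real n" using n by (simp add: power2_eq_square)
    finally show ?thesis .
  qed
  have "(\<lambda>n. 1 / real (Suc n)) \<longlonglongrightarrow> 0" using LIMSEQ_inverse_real_of_nat by (simp add: inverse_eq_divide)
  then have "prob {\<omega>\<in>space M. Xs k \<omega> = Xs l \<omega>} \<le> 0"
    using le by (intro LIMSEQ_le_const[where a="prob {\<omega>\<in>space M. Xs k \<omega> = Xs l \<omega>}"]) (auto simp del: of_nat_Suc)
  then show ?thesis using measure_nonneg[of M] by (simp add: order_antisym)
qed

lemma Ys_prob: "B \<in> sets borel \<Longrightarrow> prob {\<omega>\<in>space M. Ys i \<omega> \<in> B} = prob {\<omega>\<in>space M. Y \<omega> \<in> B}"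
proof -
  assume B: "B \<in> sets borel"
  have "(UNIV::real set) \<times> B \<in> sets (borel \<Otimes>\<^sub>M borel)" using B by (intro pair_measureI) auto
  then have "(UNIV::real set) \<times> B \<in> sets borel" unfolding borel_prod .
  then show ?thesis using prob_Z[of "UNIV \<times> B" i] by simp
qed

lemma no_tie_Y:
  assumes kl: "k \<noteq> l"
  shows "prob {\<omega>\<in>space M. Ys k \<omega> = Ys l \<omega>} = 0"
proof -
  have le: "prob {\<omega>\<in>space M. Ys k \<omega> = Ys l \<omega>} \<le> 1 / real n" if n: "n \<ge> 1" for n
  proof -
    define C where "C q = qset G n (Suc q) - qset G n q" for q
    have Cb: "C q \<in> sets borel" for q unfolding C_def by (intro sets.Diff qset_borel)
    define E where "E q = {\<omega>\<in>space M. Ys k \<omega> \<in> C q \<and> Ys l \<omega> \<in> C q}" for q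
    have Es: "E q \<in> sets M" for q unfolding E_def using Cb by measurable
    have sub: "{\<omega>\<in>space M. Ys k \<omega> = Ys l \<omega>} \<subseteq> (\<Union>q\<in>{..<n}. E q)"
    proof
      fix \<omega> assume \<omega>: "\<omega> \<in> {\<omega>\<in>space M. Ys k \<omega> = Ys l \<omega>}"
      obtain q where "q < n" "Ys k \<omega> \<in> qset G n (Suc q)" "Ys k \<omega> \<notin> qset G n q"
        using qf.qset_cover[OF qfG n] by blast
      then show "\<omega> \<in> (\<Union>q\<in>{..<n}. E q)" using \<omega> unfolding E_def C_def by auto
    qed
    have pC: "prob {\<omega>\<in>space M. Y \<omega> \<in> C q} = 1 / real n" if q: "q < n" for q
    proof -
      have "{\<omega>\<in>space M. Y \<omega> \<in> C q} = {\<omega>\<in>space M. Y \<omega> \<in> qset G n (Suc q)} - {\<omega>\<in>space M. Y \<omega> \<in> qset G n q}"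
        unfolding C_def by auto
      also have "prob \<dots> = prob {\<omega>\<in>space M. Y \<omega> \<in> qset G n (Suc q)} - prob {\<omega>\<in>space M. Y \<omega> \<in> qset G n q}"
        using qf.qset_nested[OF qfG, of n q] qset_borel by (intro finite_measure_Diff) (measurable, auto)
      also have "\<dots> = 1 / real n"
        using probY_qset[OF n, of "Suc q"] probY_qset[OF n, of q] q n by (simp add: field_simps)
      finally show ?thesis .
    qed
    have pE: "prob (E q) = (1 / real n)\<^sup>2" if q: "q < n" for q
    proof -
      define Z where "Z i \<omega> = (Xs i \<omega>, Ys i \<omega>)" for i \<omega>
      have "(UNIV::real set) \<times> C q \<in> sets (borel \<Otimes>\<^sub>M borel)" using Cb by (intro pair_measureI) auto
      then have UC: "(UNIV::real set) \<times> C q \<in> sets borel" unfolding borel_prod .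
      have "prob (\<Inter>i\<in>{k,l}. Z i -` (UNIV \<times> C q) \<inter> space M) = (\<Prod>i\<in>{k,l}. prob (Z i -` (UNIV \<times> C q) \<inter> space M))"
        by (rule indep_varsD[OF indep[folded Z_def]]) (use UC in auto)
      moreover have "(\<Inter>i\<in>{k,l}. Z i -` (UNIV \<times> C q) \<inter> space M) = E q"
        unfolding E_def Z_def by auto
      moreover have "prob (Z i -` (UNIV \<times> C q) \<inter> space M) = 1 / real n" for i
      proof -
        have "Z i -` (UNIV \<times> C q) \<inter> space M = {\<omega>\<in>space M. Ys i \<omega> \<in> C q}" unfolding Z_def by auto
        then show ?thesis using Ys_prob[OF Cb, of i] pC[OF q] by simp
      qed
      ultimately show ?thesis using kl by (simp add: power2_eq_square)
    qed
    have "prob {\<omega>\<in>space M. Ys k \<omega> = Ys l \<omega>} \<le> prob (\<Union>q\<in>{..<n}. E q)"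
      using sub Es by (intro finite_measure_mono) auto
    also have "\<dots> \<le> (\<Sum>q<n. prob (E q))" using Es by (intro measure_UNION_le) auto
    also have "\<dots> = real n * (1 / real n)\<^sup>2" using pE by simp
    also have "\<dots> = 1 / real n" using n by (simp add: power2_eq_square)
    finally show ?thesis .
  qed
  have "(\<lambda>n. 1 / real (Suc n)) \<longlonglongrightarrow> 0" using LIMSEQ_inverse_real_of_nat by (simp add: inverse_eq_divide)
  then have "prob {\<omega>\<in>space M. Ys k \<omega> = Ys l \<omega>} \<le> 0"
    using le by (intro LIMSEQ_le_const[where a="prob {\<omega>\<in>space M. Ys k \<omega> = Ys l \<omega>}"]) (auto simp del: of_nat_Suc)
  then show ?thesis using measure_nonneg[of M] by (simp add: order_antisym)
qed

end

context cs
begin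

definition "Hn n \<omega> I J = real (card {k. k < n \<and> Xs k \<omega> \<in> I \<and> Ys k \<omega> \<in> J}) / real n"
definition "Hp I J = prob {\<omega>\<in>space M. X \<omega> \<in> I \<and> Y \<omega> \<in> J}"

lemma sum_ind_card:
  "(\<Sum>k<n. indicator (I \<times> J) (Xs k \<omega>, Ys k \<omega>) :: real) = real (card {k. k < n \<and> Xs k \<omega> \<in> I \<and> Ys k \<omega> \<in> J})"
proof -
  have "(\<Sum>k<n. indicator (I \<times> J) (Xs k \<omega>, Ys k \<omega>) :: real) = (\<Sum>k\<in>{k. k < n \<and> Xs k \<omega> \<in> I \<and> Ys k \<omega> \<in> J}. 1)"
    by (intro sum.mono_neutral_cong_right) (auto simp: indicator_def)
  then show ?thesis by simp
qed

lemma IJ_borel: "I \<in> sets borel \<Longrightarrow> J \<in> sets borel \<Longrightarrow> I \<times> J \<in> sets (borel :: (real \<times> real) measure)"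
proof -
  assume "I \<in> sets borel" "J \<in> sets borel"
  then have "I \<times> J \<in> sets (borel \<Otimes>\<^sub>M (borel :: real measure))" by (intro pair_measureI) auto
  then show ?thesis unfolding borel_prod .
qed

lemma cnt_meas:
  assumes "I \<in> sets borel" "J \<in> sets borel"
  shows "(\<lambda>\<omega>. \<Sum>k<n. indicator (I \<times> J) (Xs k \<omega>, Ys k \<omega>) :: real) \<in> borel_measurable M"
proof (intro borel_measurable_sum)
  fix k
  have ind: "(indicator (I \<times> J) :: real \<times> real \<Rightarrow> real) \<in> borel_measurable borel"
    by (rule borel_measurable_indicator[OF IJ_borel[OF assms]])
  show "(\<lambda>\<omega>. indicator (I \<times> J) (Xs k \<omega>, Ys k \<omega>) :: real) \<in> borel_measurable M"
    using measurable_compose[OF Z_meas ind] by simp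
qed

lemma hoeff:
  assumes I: "I \<in> sets borel" and J: "J \<in> sets borel" and n: "n \<ge> 1" and e: "\<epsilon> \<ge> 0"
  shows "prob {\<omega>\<in>space M. \<epsilon> \<le> \<bar>(\<Sum>k<n. indicator (I \<times> J) (Xs k \<omega>, Ys k \<omega>) :: real) / real n - Hp I J\<bar>}
           \<le> 2 * exp (- 2 * real n * \<epsilon>\<^sup>2)"
proof -
  define W where "W = (\<lambda>k \<omega>. (indicator (I \<times> J) (Xs k \<omega>, Ys k \<omega>) :: real))"
  define W0 where "W0 = (\<lambda>\<omega>. (indicator (I \<times> J) (X \<omega>, Y \<omega>) :: real))"
  have IJ: "I \<times> J \<in> sets borel" by (rule IJ_borel[OF I J])
  have ind: "(indicator (I \<times> J) :: real \<times> real \<Rightarrow> real) \<in> borel_measurable borel"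
    by (rule borel_measurable_indicator[OF IJ])
  have W0m: "W0 \<in> borel_measurable M"
    unfolding W0_def using measurable_compose[OF XY_meas ind] by simp
  have mu: "expectation W0 = Hp I J"
  proof -
    have "expectation W0 = expectation (indicator ((\<lambda>\<omega>. (X \<omega>, Y \<omega>)) -` (I \<times> J) \<inter> space M))"
      by (intro Bochner_Integration.integral_cong) (auto simp: W0_def indicator_def)
    also have "\<dots> = prob ((\<lambda>\<omega>. (X \<omega>, Y \<omega>)) -` (I \<times> J) \<inter> space M)" by simp
    also have "(\<lambda>\<omega>. (X \<omega>, Y \<omega>)) -` (I \<times> J) \<inter> space M = {\<omega>\<in>space M. X \<omega> \<in> I \<and> Y \<omega> \<in> J}" by auto
    finally show ?thesis unfolding Hp_def .
  qed
  interpret H: Hoeffding_ineq_iid M "{..<n}" W W0 0 1 "expectation W0"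
  proof unfold_locales
    show "indep_vars (\<lambda>_. borel) W {..<n}"
      unfolding W_def
      by (rule indep_vars_subset[OF indep_vars_compose2[OF indep, of "\<lambda>_. indicator (I \<times> J)" "\<lambda>_. borel"]])
         (use ind in auto)
  next
    fix i
    have "distr M borel (W i) = distr (distr M borel (\<lambda>\<omega>. (Xs i \<omega>, Ys i \<omega>))) borel (indicator (I \<times> J))"
      by (subst distr_distr[OF ind Z_meas]) (simp add: W_def comp_def)
    also have "\<dots> = distr (distr M borel (\<lambda>\<omega>. (X \<omega>, Y \<omega>))) borel (indicator (I \<times> J))"
      by (simp add: distr_eq)
    also have "\<dots> = distr M borel W0"
      by (subst distr_distr[OF ind XY_meas]) (simp add: W0_def comp_def)
    finally show "distr M borel (W i) = distr M borel W0" .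
  next
    show "W0 \<in> borel_measurable M" by (rule W0m)
  next
    show "AE x in M. W0 x \<in> {0..1}" by (auto simp: W0_def indicator_def)
  qed auto
  have "prob {x\<in>space M. \<epsilon> \<le> \<bar>(\<Sum>i\<in>{..<n}. W i x) / real (card {..<n}) - expectation W0\<bar>}
      \<le> 2 * exp (- 2 * real (card {..<n}) * \<epsilon>\<^sup>2 / (1 - 0)\<^sup>2)"
  proof (rule H.Hoeffding_ineq_abs_ge'[OF e])
    have "(0::nat) \<in> {..<n}" using n by simp
    then show "{..<n} \<noteq> {}" by blast
  qed auto
  then show ?thesis unfolding mu W_def by simp
qed

lemma Hn_mono: "I \<subseteq> I' \<Longrightarrow> J \<subseteq> J' \<Longrightarrow> Hn n \<omega> I J \<le> Hn n \<omega> I' J'"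
  unfolding Hn_def by (intro divide_right_mono) (auto intro!: card_mono)

lemma Hp_mono: "I' \<in> sets borel \<Longrightarrow> J' \<in> sets borel \<Longrightarrow> I \<subseteq> I' \<Longrightarrow> J \<subseteq> J' \<Longrightarrow> Hp I J \<le> Hp I' J'"
  unfolding Hp_def by (intro finite_measure_mono) (auto, measurable)

lemma Hp_gap:
  assumes n: "n \<ge> 1" and q: "q < n" and r: "r < n"
  shows "Hp (qset F n (Suc q)) (qset G n (Suc r)) \<le> Hp (qset F n q) (qset G n r) + 2 / real n"
proof -
  define I0 where "I0 = qset F n q"
  define I1 where "I1 = qset F n (Suc q)"
  define J0 where "J0 = qset G n r"
  define J1 where "J1 = qset G n (Suc r)"
  have b: "I0 \<in> sets borel" "I1 \<in> sets borel" "J0 \<in> sets borel" "J1 \<in> sets borel"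
    unfolding I0_def I1_def J0_def J1_def by (auto intro: qset_borel)
  have nest: "I0 \<subseteq> I1" "J0 \<subseteq> J1"
    unfolding I0_def I1_def J0_def J1_def using qf.qset_nested[OF qfF] qf.qset_nested[OF qfG] by auto
  have sub: "{\<omega>\<in>space M. X \<omega> \<in> I1 \<and> Y \<omega> \<in> J1} \<subseteq>
      ({\<omega>\<in>space M. X \<omega> \<in> I0 \<and> Y \<omega> \<in> J0} \<union> ({\<omega>\<in>space M. X \<omega> \<in> I1} - {\<omega>\<in>space M. X \<omega> \<in> I0}))
      \<union> ({\<omega>\<in>space M. Y \<omega> \<in> J1} - {\<omega>\<in>space M. Y \<omega> \<in> J0})" by auto
  have m: "{\<omega>\<in>space M. X \<omega> \<in> I0 \<and> Y \<omega> \<in> J0} \<in> sets M" "{\<omega>\<in>space M. X \<omega> \<in> I1} \<in> sets M"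
    "{\<omega>\<in>space M. X \<omega> \<in> I0} \<in> sets M" "{\<omega>\<in>space M. Y \<omega> \<in> J1} \<in> sets M" "{\<omega>\<in>space M. Y \<omega> \<in> J0} \<in> sets M"
    using b by measurable
  have dX: "prob ({\<omega>\<in>space M. X \<omega> \<in> I1} - {\<omega>\<in>space M. X \<omega> \<in> I0}) = 1 / real n"
  proof -
    have "prob ({\<omega>\<in>space M. X \<omega> \<in> I1} - {\<omega>\<in>space M. X \<omega> \<in> I0}) = prob {\<omega>\<in>space M. X \<omega> \<in> I1} - prob {\<omega>\<in>space M. X \<omega> \<in> I0}"
      using nest m by (intro finite_measure_Diff) auto
    also have "\<dots> = 1 / real n" unfolding I0_def I1_def
      using probX_qset[OF n, of "Suc q"] probX_qset[OF n, of q] q n by (simp add: field_simps)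
    finally show ?thesis .
  qed
  have dY: "prob ({\<omega>\<in>space M. Y \<omega> \<in> J1} - {\<omega>\<in>space M. Y \<omega> \<in> J0}) = 1 / real n"
  proof -
    have "prob ({\<omega>\<in>space M. Y \<omega> \<in> J1} - {\<omega>\<in>space M. Y \<omega> \<in> J0}) = prob {\<omega>\<in>space M. Y \<omega> \<in> J1} - prob {\<omega>\<in>space M. Y \<omega> \<in> J0}"
      using nest m by (intro finite_measure_Diff) auto
    also have "\<dots> = 1 / real n" unfolding J0_def J1_def
      using probY_qset[OF n, of "Suc r"] probY_qset[OF n, of r] r n by (simp add: field_simps)
    finally show ?thesis .
  qed
  have "Hp I1 J1 \<le> prob (({\<omega>\<in>space M. X \<omega> \<in> I0 \<and> Y \<omega> \<in> J0} \<union> ({\<omega>\<in>space M. X \<omega> \<in> I1} - {\<omega>\<in>space M. X \<omega> \<in> I0}))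
      \<union> ({\<omega>\<in>space M. Y \<omega> \<in> J1} - {\<omega>\<in>space M. Y \<omega> \<in> J0}))"
    unfolding Hp_def using sub m by (intro finite_measure_mono) auto
  also have "\<dots> \<le> prob ({\<omega>\<in>space M. X \<omega> \<in> I0 \<and> Y \<omega> \<in> J0} \<union> ({\<omega>\<in>space M. X \<omega> \<in> I1} - {\<omega>\<in>space M. X \<omega> \<in> I0}))
      + prob ({\<omega>\<in>space M. Y \<omega> \<in> J1} - {\<omega>\<in>space M. Y \<omega> \<in> J0})"
    using m by (intro measure_Un_le) auto
  also have "\<dots> \<le> Hp I0 J0 + prob ({\<omega>\<in>space M. X \<omega> \<in> I1} - {\<omega>\<in>space M. X \<omega> \<in> I0})
      + prob ({\<omega>\<in>space M. Y \<omega> \<in> J1} - {\<omega>\<in>space M. Y \<omega> \<in> J0})"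
    unfolding Hp_def using m by (intro add_mono measure_Un_le) auto
  finally have "Hp I1 J1 \<le> Hp I0 J0 + 2 / real n" using dX dY by simp
  then show ?thesis unfolding I0_def I1_def J0_def J1_def .
qed

lemma sandwich_bound:
  assumes n: "n \<ge> 1"
    and grid: "\<And>q r. q \<le> n \<Longrightarrow> r \<le> n \<Longrightarrow> \<bar>Hn n \<omega> (qset F n q) (qset G n r) - Hp (qset F n q) (qset G n r)\<bar> \<le> t"
    and I: "I = UNIV \<or> (\<exists>x. I = {..x})" and J: "J = UNIV \<or> (\<exists>y. J = {..y})"
  shows "\<bar>Hn n \<omega> I J - Hp I J\<bar> \<le> t + 2 / real n"
proof -
  obtain q where q: "q < n" "qset F n q \<subseteq> I" "I \<subseteq> qset F n (Suc q)"
    using qf.qset_sandwich[OF qfF n I] by blast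
  obtain r where r: "r < n" "qset G n r \<subseteq> J" "J \<subseteq> qset G n (Suc r)"
    using qf.qset_sandwich[OF qfG n J] by blast
  have IJb: "I \<in> sets borel" "J \<in> sets borel" using I J by auto
  have "Hn n \<omega> I J \<le> Hn n \<omega> (qset F n (Suc q)) (qset G n (Suc r))" using q r by (intro Hn_mono)
  also have "\<dots> \<le> Hp (qset F n (Suc q)) (qset G n (Suc r)) + t" using grid[of "Suc q" "Suc r"] q r by auto
  also have "\<dots> \<le> Hp (qset F n q) (qset G n r) + 2 / real n + t" using Hp_gap[OF n q(1) r(1)] by simp
  also have "Hp (qset F n q) (qset G n r) \<le> Hp I J" using q r IJb by (intro Hp_mono)
  finally have up: "Hn n \<omega> I J \<le> Hp I J + 2 / real n + t" by simp
  have "Hp I J \<le> Hp (qset F n (Suc q)) (qset G n (Suc r))" using q r by (intro Hp_mono qset_borel)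
  also have "\<dots> \<le> Hp (qset F n q) (qset G n r) + 2 / real n" using Hp_gap[OF n q(1) r(1)] by simp
  also have "Hp (qset F n q) (qset G n r) \<le> Hn n \<omega> (qset F n q) (qset G n r) + t" using grid[of q r] q r by auto
  also have "Hn n \<omega> (qset F n q) (qset G n r) \<le> Hn n \<omega> I J" using q r by (intro Hn_mono)
  finally have lo: "Hp I J \<le> Hn n \<omega> I J + t + 2 / real n" by simp
  show ?thesis using up lo by linarith
qed

end

lemma summable_aux:
  fixes a :: real
  assumes a: "a > 0"
  shows "summable (\<lambda>n. 2 * (real n + 1)\<^sup>2 * exp (- 2 * real n powr a))"
proof -
  have "(\<lambda>n. 2 * (real n + 1)\<^sup>2 * exp (- 2 * real n powr a) * (real n)\<^sup>2) \<longlonglongrightarrow> 0"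
    using a by real_asymp
  then have "eventually (\<lambda>n. 2 * (real n + 1)\<^sup>2 * exp (- 2 * real n powr a) * (real n)\<^sup>2 < 1) sequentially"
    by (rule order_tendstoD) simp
  then obtain N where N: "\<And>n. n \<ge> N \<Longrightarrow> 2 * (real n + 1)\<^sup>2 * exp (- 2 * real n powr a) * (real n)\<^sup>2 < 1"
    by (auto simp: eventually_sequentially)
  have su: "summable (\<lambda>n. inverse (real n ^ 2))" by (rule inverse_power_summable) simp
  show ?thesis
  proof (rule summable_comparison_test'[OF su, where N="max N 1"])
    fix n assume n: "max N 1 \<le> n"
    have np: "(real n)\<^sup>2 > 0" using n by simp
    have "2 * (real n + 1)\<^sup>2 * exp (- 2 * real n powr a) * (real n)\<^sup>2 < 1" using N n by simp
    then have "2 * (real n + 1)\<^sup>2 * exp (- 2 * real n powr a) \<le> inverse ((real n)\<^sup>2)"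
      using np by (simp add: field_simps)
    then show "norm (2 * (real n + 1)\<^sup>2 * exp (- 2 * real n powr a)) \<le> inverse (real n ^ 2)" by simp
  qed
qed

context cs
begin

lemma grid_AE:
  assumes s1: "0 < s'" and s2: "s' < 1/2"
  shows "AE \<omega> in M. eventually (\<lambda>n. \<forall>q\<le>n. \<forall>r\<le>n.
      \<bar>Hn n \<omega> (qset F n q) (qset G n r) - Hp (qset F n q) (qset G n r)\<bar> < real n powr (- s')) sequentially"
proof -
  define cnt where "cnt n q r \<omega> = (\<Sum>k<n. indicator (qset F n q \<times> qset G n r) (Xs k \<omega>, Ys k \<omega>) :: real)" for n q r \<omega>
  have cm[measurable]: "cnt n q r \<in> borel_measurable M" for n q r
    unfolding cnt_def by (rule cnt_meas) (auto intro: qset_borel)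
  define S where "S n p = {\<omega>\<in>space M. real n powr (- s') \<le> \<bar>cnt n (fst p) (snd p) \<omega> / real n - Hp (qset F n (fst p)) (qset G n (snd p))\<bar>}" for n p
  have Ss: "S n p \<in> sets M" for n p unfolding S_def by measurable
  define E where "E n = (\<Union>p\<in>{..n}\<times>{..n}. S n p)" for n
  have Es: "E n \<in> sets M" for n unfolding E_def using Ss by auto
  define a where "a = 1 - 2 * s'"
  have a: "a > 0" using s2 by (simp add: a_def)
  have bound: "measure M (E n) \<le> 2 * (real n + 1)\<^sup>2 * exp (- 2 * real n powr a)" if n: "n \<ge> 1" for n
  proof -
    have pS: "prob (S n p) \<le> 2 * exp (- 2 * real n powr a)" for p
    proof -
      have h1: "prob (S n p) \<le> 2 * exp (- 2 * real n * (real n powr (- s'))\<^sup>2)"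
        unfolding S_def cnt_def by (rule hoeff[OF qset_borel qset_borel n]) simp
      have eq: "real n * (real n powr (- s'))\<^sup>2 = real n powr a"
      proof -
        have "(real n powr (- s'))\<^sup>2 = real n powr (- 2 * s')"
          using n by (simp add: power2_eq_square powr_add[symmetric])
        moreover have "real n * real n powr (- 2 * s') = real n powr a"
        proof -
          have "real n powr a = real n powr (1 + (- 2 * s'))" by (simp add: a_def)
          also have "\<dots> = real n powr 1 * real n powr (- 2 * s')" by (rule powr_add)
          also have "\<dots> = real n * real n powr (- 2 * s')" using n by simp
          finally show ?thesis by simp
        qed
        ultimately show ?thesis by simp
      qed
      have e3: "- 2 * real n * (real n powr (- s'))\<^sup>2 = - 2 * real n powr a"
        using eq by (metis mult.assoc)
      show ?thesis using h1 unfolding e3 .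
    qed
    have "measure M (E n) \<le> (\<Sum>p\<in>{..n}\<times>{..n}. prob (S n p))"
      unfolding E_def using Ss by (intro measure_UNION_le) auto
    also have "\<dots> \<le> (\<Sum>p\<in>{..n}\<times>{..n}. 2 * exp (- 2 * real n powr a))"
      by (intro sum_mono pS)
    also have "\<dots> = (real n + 1)\<^sup>2 * (2 * exp (- 2 * real n powr a))"
      by (simp add: card_cartesian_product power2_eq_square algebra_simps)
    finally show ?thesis by (simp add: mult_ac)
  qed
  have summ: "summable (\<lambda>n. measure M (E n))"
  proof (rule summable_comparison_test'[OF summable_aux[OF a], where N=1])
    fix n :: nat assume "1 \<le> n"
    then show "norm (measure M (E n)) \<le> 2 * (real n + 1)\<^sup>2 * exp (- 2 * real n powr a)"
      using bound by simp
  qed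
  have "AE \<omega> in M. eventually (\<lambda>n. \<omega> \<in> space M - E n) sequentially"
    by (rule borel_cantelli_AE1[OF Es _ summ]) (simp add: emeasure_eq_measure)
  then show ?thesis
  proof (rule eventually_mono)
    fix \<omega> assume ev: "eventually (\<lambda>n. \<omega> \<in> space M - E n) sequentially"
    show "eventually (\<lambda>n. \<forall>q\<le>n. \<forall>r\<le>n.
      \<bar>Hn n \<omega> (qset F n q) (qset G n r) - Hp (qset F n q) (qset G n r)\<bar> < real n powr (- s')) sequentially"
      using ev
    proof (rule eventually_mono)
      fix n assume "\<omega> \<in> space M - E n"
      then have w: "\<omega> \<in> space M" "\<And>p. p \<in> {..n}\<times>{..n} \<Longrightarrow> \<omega> \<notin> S n p" unfolding E_def by auto
      show "\<forall>q\<le>n. \<forall>r\<le>n. \<bar>Hn n \<omega> (qset F n q) (qset G n r) - Hp (qset F n q) (qset G n r)\<bar> < real n powr (- s')"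
      proof (intro allI impI)
        fix q r assume qr: "q \<le> n" "r \<le> n"
        have "\<omega> \<notin> S n (q, r)" using w(2)[of "(q,r)"] qr by auto
        then have "\<not> real n powr (- s') \<le> \<bar>cnt n q r \<omega> / real n - Hp (qset F n q) (qset G n r)\<bar>"
          using w(1) unfolding S_def by auto
        moreover have "cnt n q r \<omega> / real n = Hn n \<omega> (qset F n q) (qset G n r)"
          unfolding cnt_def Hn_def sum_ind_card ..
        ultimately show "\<bar>Hn n \<omega> (qset F n q) (qset G n r) - Hp (qset F n q) (qset G n r)\<bar> < real n powr (- s')"
          by simp
      qed
    qed
  qed
qed

lemma prob_main:
  assumes s1: "0 < s'" and s2: "s' < 1/2"
  shows "AE \<omega> in M. eventually (\<lambda>n. n \<ge> 1 \<and>
      (\<forall>x y. \<bar>emp_joint_df n (\<lambda>k. Xs k \<omega>) (\<lambda>k. Ys k \<omega>) x y - prob {\<omega>\<in>space M. X \<omega> \<le> x \<and> Y \<omega> \<le> y}\<bar> \<le> real n powr (- s') + 2 / real n) \<and>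
      (\<forall>x. \<bar>emp_df n (\<lambda>k. Xs k \<omega>) x - F x\<bar> \<le> real n powr (- s') + 2 / real n) \<and>
      (\<forall>y. \<bar>emp_df n (\<lambda>k. Ys k \<omega>) y - G y\<bar> \<le> real n powr (- s') + 2 / real n)) sequentially"
  using grid_AE[OF s1 s2]
proof (rule eventually_mono)
  fix \<omega>
  assume ev: "eventually (\<lambda>n. \<forall>q\<le>n. \<forall>r\<le>n.
      \<bar>Hn n \<omega> (qset F n q) (qset G n r) - Hp (qset F n q) (qset G n r)\<bar> < real n powr (- s')) sequentially"
  show "eventually (\<lambda>n. n \<ge> 1 \<and>
      (\<forall>x y. \<bar>emp_joint_df n (\<lambda>k. Xs k \<omega>) (\<lambda>k. Ys k \<omega>) x y - prob {\<omega>\<in>space M. X \<omega> \<le> x \<and> Y \<omega> \<le> y}\<bar> \<le> real n powr (- s') + 2 / real n) \<and>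
      (\<forall>x. \<bar>emp_df n (\<lambda>k. Xs k \<omega>) x - F x\<bar> \<le> real n powr (- s') + 2 / real n) \<and>
      (\<forall>y. \<bar>emp_df n (\<lambda>k. Ys k \<omega>) y - G y\<bar> \<le> real n powr (- s') + 2 / real n)) sequentially"
    using eventually_conj[OF ev eventually_ge_at_top[of 1]]
  proof (rule eventually_mono)
    fix n assume h: "(\<forall>q\<le>n. \<forall>r\<le>n.
      \<bar>Hn n \<omega> (qset F n q) (qset G n r) - Hp (qset F n q) (qset G n r)\<bar> < real n powr (- s')) \<and> 1 \<le> n"
    then have n: "n \<ge> 1" by simp
    have grid: "\<And>q r. q \<le> n \<Longrightarrow> r \<le> n \<Longrightarrow> \<bar>Hn n \<omega> (qset F n q) (qset G n r) - Hp (qset F n q) (qset G n r)\<bar> \<le> real n powr (- s')"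
      using h by (simp add: less_imp_le)
    note sb = sandwich_bound[OF n grid]
    have e1: "emp_joint_df n (\<lambda>k. Xs k \<omega>) (\<lambda>k. Ys k \<omega>) x y = Hn n \<omega> {..x} {..y}" for x y
      unfolding emp_joint_df_def Hn_def by simp
    have e2: "prob {\<omega>\<in>space M. X \<omega> \<le> x \<and> Y \<omega> \<le> y} = Hp {..x} {..y}" for x y
      unfolding Hp_def by simp
    have e3: "emp_df n (\<lambda>k. Xs k \<omega>) x = Hn n \<omega> {..x} UNIV" for x
      unfolding emp_df_def Hn_def by simp
    have e4: "F x = Hp {..x} UNIV" for x unfolding F_def Hp_def by simp
    have e5: "emp_df n (\<lambda>k. Ys k \<omega>) y = Hn n \<omega> UNIV {..y}" for y
      unfolding emp_df_def Hn_def by simp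
    have e6: "G y = Hp UNIV {..y}" for y unfolding G_def Hp_def by simp
    show "n \<ge> 1 \<and>
      (\<forall>x y. \<bar>emp_joint_df n (\<lambda>k. Xs k \<omega>) (\<lambda>k. Ys k \<omega>) x y - prob {\<omega>\<in>space M. X \<omega> \<le> x \<and> Y \<omega> \<le> y}\<bar> \<le> real n powr (- s') + 2 / real n) \<and>
      (\<forall>x. \<bar>emp_df n (\<lambda>k. Xs k \<omega>) x - F x\<bar> \<le> real n powr (- s') + 2 / real n) \<and>
      (\<forall>y. \<bar>emp_df n (\<lambda>k. Ys k \<omega>) y - G y\<bar> \<le> real n powr (- s') + 2 / real n)"
      unfolding e1 e2 e3 e4 e5 e6 using n by (auto intro!: sb)
  qed
qed

lemma ties_AE: "AE \<omega> in M. \<forall>k l. k \<noteq> l \<longrightarrow> Xs k \<omega> \<noteq> Xs l \<omega> \<and> Ys k \<omega> \<noteq> Ys l \<omega>"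
proof -
  have "AE \<omega> in M. k \<noteq> l \<longrightarrow> Xs k \<omega> \<noteq> Xs l \<omega> \<and> Ys k \<omega> \<noteq> Ys l \<omega>" for k l
  proof (cases "k = l")
    case True then show ?thesis by simp
  next
    case False
    have s1: "{\<omega>\<in>space M. Xs k \<omega> = Xs l \<omega>} \<in> null_sets M"
      using no_tie[OF False] by (auto simp: null_sets_def emeasure_eq_measure) measurable
    have s2: "{\<omega>\<in>space M. Ys k \<omega> = Ys l \<omega>} \<in> null_sets M"
      using no_tie_Y[OF False] by (auto simp: null_sets_def emeasure_eq_measure) measurable
    show ?thesis
      by (rule AE_I'[OF null_sets.Un[OF s1 s2]]) auto
  qed
  then have "\<forall>k. AE \<omega> in M. \<forall>l. k \<noteq> l \<longrightarrow> Xs k \<omega> \<noteq> Xs l \<omega> \<and> Ys k \<omega> \<noteq> Ys l \<omega>"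
    by (simp add: AE_all_countable)
  then show ?thesis by (simp add: AE_all_countable)
qed

end

lemma rate_lemma:
  fixes s s' :: real
  assumes s: "0 < s" "s < s'" "s' < 1/2"
  shows "(\<lambda>n. 2 * real n powr s * (3 * (real n powr (- s') + 2 / real n) + 2 / real n)) \<longlonglongrightarrow> 0"
proof -
  define c where "c = s' - s"
  define d where "d = 1 - s"
  have c: "c > 0" and d: "d > 0" using s by (auto simp: c_def d_def)
  have lim: "(\<lambda>n. 6 * real n powr (- c) + 16 * real n powr (- d)) \<longlonglongrightarrow> 0"
  proof -
    have "(\<lambda>n. real n powr (- c)) \<longlonglongrightarrow> 0" using c by (intro tendsto_neg_powr filterlim_real_sequentially) auto
    moreover have "(\<lambda>n. real n powr (- d)) \<longlonglongrightarrow> 0" using d by (intro tendsto_neg_powr filterlim_real_sequentially) auto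
    ultimately have "(\<lambda>n. 6 * real n powr (- c) + 16 * real n powr (- d)) \<longlonglongrightarrow> 6 * 0 + 16 * 0"
      by (intro tendsto_add tendsto_mult tendsto_const)
    then show ?thesis by simp
  qed
  have evq: "eventually (\<lambda>n. 6 * real n powr (- c) + 16 * real n powr (- d) =
      2 * real n powr s * (3 * (real n powr (- s') + 2 / real n) + 2 / real n)) sequentially"
    using eventually_ge_at_top[of 1]
  proof (rule eventually_mono)
    fix n :: nat assume n: "n \<ge> 1"
    have np: "real n > 0" using n by simp
    have e1: "real n powr s * real n powr (- s') = real n powr (- c)"
      unfolding c_def by (simp add: powr_add[symmetric])
    have e2: "real n powr s / real n = real n powr (- d)"
    proof -
      have "real n powr s / real n = real n powr s / real n powr 1" using np by simp
      also have "\<dots> = real n powr (s - 1)" by (simp add: powr_diff)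
      finally show ?thesis by (simp add: d_def)
    qed
    have "2 * real n powr s * (3 * (real n powr (- s') + 2 / real n) + 2 / real n)
        = 6 * (real n powr s * real n powr (- s')) + 16 * (real n powr s / real n)"
      by (simp add: algebra_simps)
    then show "6 * real n powr (- c) + 16 * real n powr (- d) =
      2 * real n powr s * (3 * (real n powr (- s') + 2 / real n) + 2 / real n)"
      using e1 e2 by simp
  qed
  show ?thesis by (rule Lim_transform_eventually[OF lim evq])
qed

lemma det_main:
  fixes xs ys :: "nat \<Rightarrow> real" and F G :: "real \<Rightarrow> real"
  assumes A: "is_copula A" and K: "cont_markov_kernel A K"
    and s: "0 < s" "s < s'" "s' < 1/2"
    and F01: "\<And>x. F x \<in> {0..1}" and G01: "\<And>y. G y \<in> {0..1}"
    and ix: "\<And>n. inj_on xs {..<n}" and iy: "\<And>n. inj_on ys {..<n}"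
    and ev: "eventually (\<lambda>n. n \<ge> 1 \<and>
      (\<forall>x y. \<bar>emp_joint_df n xs ys x y - A (F x) (G y)\<bar> \<le> real n powr (- s') + 2 / real n) \<and>
      (\<forall>x. \<bar>emp_df n xs x - F x\<bar> \<le> real n powr (- s') + 2 / real n) \<and>
      (\<forall>y. \<bar>emp_df n ys y - G y\<bar> \<le> real n powr (- s') + 2 / real n)) sequentially"
  shows "(\<lambda>n. SUP p\<in>{0..1} \<times> {0..1}.
        \<bar>bernstein_kernel (nat \<lfloor>real n powr s\<rfloor>) (emp_copula n xs ys) (fst p) (snd p) - K (fst p) (snd p)\<bar>)
    \<longlonglongrightarrow> 0"
proof -
  define f where "f n p = \<bar>bernstein_kernel (nat \<lfloor>real n powr s\<rfloor>) (emp_copula n xs ys) (fst p) (snd p) - K (fst p) (snd p)\<bar>" for n p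
  have key: "eventually (\<lambda>n. \<forall>p\<in>{0..1} \<times> {0..1}. f n p \<le> e) sequentially" if e: "e > 0" for e
  proof -
    have "\<exists>N0. \<forall>N\<ge>N0. \<forall>x\<in>{0..1}. \<forall>y\<in>{0..1}. \<bar>bernstein_kernel N A x y - K x y\<bar> \<le> e/2"
      using kernel_approx[OF A K, of "e/2"] e by simp
    then obtain N0 where N0a: "\<forall>N\<ge>N0. \<forall>x\<in>{0..1}. \<forall>y\<in>{0..1}. \<bar>bernstein_kernel N A x y - K x y\<bar> \<le> e/2"
      by blast
    have N0: "\<And>N x y. N \<ge> N0 \<Longrightarrow> x \<in> {0..1} \<Longrightarrow> y \<in> {0..1} \<Longrightarrow>
        \<bar>bernstein_kernel N A x y - K x y\<bar> \<le> e/2"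
      using N0a by blast
    have "filterlim (\<lambda>n. real n powr s) at_top sequentially" using s by real_asymp
    then have ev1: "eventually (\<lambda>n. real n powr s \<ge> real (max N0 1)) sequentially"
      by (simp add: filterlim_at_top)
    have ev2: "eventually (\<lambda>n. 2 * real n powr s * (3 * (real n powr (- s') + 2 / real n) + 2 / real n) < e/2) sequentially"
      using rate_lemma[OF s] e by (intro order_tendstoD(2)) auto
    show ?thesis
      using eventually_conj[OF ev eventually_conj[OF ev1 ev2]]
    proof (rule eventually_mono)
      fix n assume h: "(n \<ge> 1 \<and>
        (\<forall>x y. \<bar>emp_joint_df n xs ys x y - A (F x) (G y)\<bar> \<le> real n powr (- s') + 2 / real n) \<and>
        (\<forall>x. \<bar>emp_df n xs x - F x\<bar> \<le> real n powr (- s') + 2 / real n) \<and>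
        (\<forall>y. \<bar>emp_df n ys y - G y\<bar> \<le> real n powr (- s') + 2 / real n)) \<and>
        real n powr s \<ge> real (max N0 1) \<and>
        2 * real n powr s * (3 * (real n powr (- s') + 2 / real n) + 2 / real n) < e/2"
      define t where "t = real n powr (- s') + 2 / real n"
      define N where "N = nat \<lfloor>real n powr s\<rfloor>"
      have n: "n \<ge> 1" using h by simp
      have "real (max N0 1) \<le> real n powr s" using h by blast
      then have NN0: "N \<ge> max N0 1" unfolding N_def by (rule le_nat_floor)
      then have N1: "N \<ge> 1" and N0': "N \<ge> N0" by auto
      have Nle: "real N \<le> real n powr s" unfolding N_def using s by simp
      have close: "\<bar>emp_copula n xs ys u v - A u v\<bar> \<le> 3 * t + 2 / real n" if "u \<in> {0..1}" "v \<in> {0..1}" for u v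
        by (rule emp_copula_close[OF A n ix iy F01 G01 _ _ _ that]) (use h in \<open>auto simp: t_def\<close>)
      have tpos: "0 \<le> 3 * t + 2 / real n" unfolding t_def by simp
      have small: "2 * real N * (3 * t + 2 / real n) < e/2"
      proof -
        have "2 * real N * (3 * t + 2 / real n) \<le> 2 * real n powr s * (3 * t + 2 / real n)"
          using Nle tpos by (intro mult_right_mono) auto
        then show ?thesis using h unfolding t_def by linarith
      qed
      show "\<forall>p\<in>{0..1} \<times> {0..1}. f n p \<le> e"
      proof
        fix p :: "real \<times> real" assume p: "p \<in> {0..1} \<times> {0..1}"
        then have x: "fst p \<in> {0..1}" and y: "snd p \<in> {0..1}" by auto
        have "\<bar>bernstein_kernel N (emp_copula n xs ys) (fst p) (snd p) - bernstein_kernel N A (fst p) (snd p)\<bar>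
            \<le> 2 * real N * (3 * t + 2 / real n)"
        proof (rule kernel_perturb[OF N1 x y])
          fix i j assume ij: "i \<in> {1..N}" "j \<in> {1..N}"
          have "real i / real N \<in> {0..1}" "real j / real N \<in> {0..1}" using ij N1 by auto
          then show "\<bar>emp_copula n xs ys (real i / real N) (real j / real N) - A (real i / real N) (real j / real N)\<bar>
              \<le> 3 * t + 2 / real n" by (rule close)
        qed
        moreover have "\<bar>bernstein_kernel N A (fst p) (snd p) - K (fst p) (snd p)\<bar> \<le> e/2"
          by (rule N0[OF N0' x y])
        ultimately show "f n p \<le> e" unfolding f_def N_def[symmetric] using small by linarith
      qed
    qed
  qed
  have "(\<lambda>n. SUP p\<in>{0..1} \<times> {0..1}. f n p) \<longlonglongrightarrow> 0"
  proof (rule order_tendstoI)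
    fix a :: real assume a: "a < 0"
    have k1: "eventually (\<lambda>n. \<forall>p\<in>{0..1} \<times> {0..1}. f n p \<le> 1) sequentially"
      by (rule key) simp
    show "eventually (\<lambda>n. a < (SUP p\<in>{0..1} \<times> {0..1}. f n p)) sequentially"
      using k1
    proof (rule eventually_mono)
      fix n assume b: "\<forall>p\<in>{0..1} \<times> {0..1}. f n p \<le> 1"
      have "bdd_above (f n ` ({0..1} \<times> {0..1}))" using b by (intro bdd_aboveI[of _ 1]) auto
      then have "f n (0,0) \<le> (SUP p\<in>{0..1} \<times> {0..1}. f n p)" by (intro cSUP_upper) auto
      moreover have "0 \<le> f n (0,0)" unfolding f_def by simp
      ultimately show "a < (SUP p\<in>{0..1} \<times> {0..1}. f n p)" using a by linarith
    qed
  next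
    fix a :: real assume a: "0 < a"
    have k2: "eventually (\<lambda>n. \<forall>p\<in>{0..1} \<times> {0..1}. f n p \<le> a/2) sequentially"
      by (rule key) (use a in simp)
    show "eventually (\<lambda>n. (SUP p\<in>{0..1} \<times> {0..1}. f n p) < a) sequentially"
      using k2
    proof (rule eventually_mono)
      fix n assume b: "\<forall>p\<in>{0..1} \<times> {0..1}. f n p \<le> a/2"
      have "(SUP p\<in>{0..1} \<times> {0..1}. f n p) \<le> a/2" using b by (intro cSUP_least) auto
      then show "(SUP p\<in>{0..1} \<times> {0..1}. f n p) < a" using a by linarith
    qed
  qed
  then show ?thesis unfolding f_def by simp
qed

theorem lemma4p2:
  fixes M :: "'a measure"
    and X Y :: "'a \<Rightarrow> real"
    and Xs Ys :: "nat \<Rightarrow> 'a \<Rightarrow> real"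
    and A K :: "real \<Rightarrow> real \<Rightarrow> real"
    and s :: real
  assumes "prob_space M"
    and "(\<lambda>\<omega>. (X \<omega>, Y \<omega>)) \<in> borel_measurable M"
    and "prob_space.indep_vars M (\<lambda>_. borel) (\<lambda>i \<omega>. (Xs i \<omega>, Ys i \<omega>)) UNIV"
    and "\<And>i. distr M borel (\<lambda>\<omega>. (Xs i \<omega>, Ys i \<omega>)) = distr M borel (\<lambda>\<omega>. (X \<omega>, Y \<omega>))"
    and "continuous_on UNIV (\<lambda>(x,y). measure M {\<omega>\<in>space M. X \<omega> \<le> x \<and> Y \<omega> \<le> y})"
    and "is_copula A"
    and "\<And>x y. measure M {\<omega>\<in>space M. X \<omega> \<le> x \<and> Y \<omega> \<le> y}
              = A (measure M {\<omega>\<in>space M. X \<omega> \<le> x}) (measure M {\<omega>\<in>space M. Y \<omega> \<le> y})"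
    and "cont_markov_kernel A K"
    and "0 < s" "s < 1/2"
  shows "AE \<omega> in M.
    (\<lambda>n. SUP p\<in>{0..1} \<times> {0..1}.
        \<bar>bernstein_kernel (nat \<lfloor>real n powr s\<rfloor>)
            (emp_copula n (\<lambda>k. Xs k \<omega>) (\<lambda>k. Ys k \<omega>)) (fst p) (snd p) - K (fst p) (snd p)\<bar>)
    \<longlonglongrightarrow> 0"
proof -
  have "cs M X Y Xs Ys"
    unfolding cs_def cs_axioms_def using assms(1-5) by auto
  then interpret cs M X Y Xs Ys .
  define s' where "s' = (s + 1/2) / 2"
  have s': "0 < s'" "s < s'" "s' < 1/2" using assms(9,10) by (auto simp: s'_def)
  have AE: "AE \<omega> in M. (\<forall>k l. k \<noteq> l \<longrightarrow> Xs k \<omega> \<noteq> Xs l \<omega> \<and> Ys k \<omega> \<noteq> Ys l \<omega>) \<and>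
      eventually (\<lambda>n. n \<ge> 1 \<and>
      (\<forall>x y. \<bar>emp_joint_df n (\<lambda>k. Xs k \<omega>) (\<lambda>k. Ys k \<omega>) x y - prob {\<omega>\<in>space M. X \<omega> \<le> x \<and> Y \<omega> \<le> y}\<bar> \<le> real n powr (- s') + 2 / real n) \<and>
      (\<forall>x. \<bar>emp_df n (\<lambda>k. Xs k \<omega>) x - F x\<bar> \<le> real n powr (- s') + 2 / real n) \<and>
      (\<forall>y. \<bar>emp_df n (\<lambda>k. Ys k \<omega>) y - G y\<bar> \<le> real n powr (- s') + 2 / real n)) sequentially"
    using ties_AE prob_main[OF s'(1) s'(3)] by (rule AE_conjI)
  then show ?thesis
  proof (rule eventually_mono)
    fix \<omega>
    assume h: "(\<forall>k l. k \<noteq> l \<longrightarrow> Xs k \<omega> \<noteq> Xs l \<omega> \<and> Ys k \<omega> \<noteq> Ys l \<omega>) \<and>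
      eventually (\<lambda>n. n \<ge> 1 \<and>
      (\<forall>x y. \<bar>emp_joint_df n (\<lambda>k. Xs k \<omega>) (\<lambda>k. Ys k \<omega>) x y - prob {\<omega>\<in>space M. X \<omega> \<le> x \<and> Y \<omega> \<le> y}\<bar> \<le> real n powr (- s') + 2 / real n) \<and>
      (\<forall>x. \<bar>emp_df n (\<lambda>k. Xs k \<omega>) x - F x\<bar> \<le> real n powr (- s') + 2 / real n) \<and>
      (\<forall>y. \<bar>emp_df n (\<lambda>k. Ys k \<omega>) y - G y\<bar> \<le> real n powr (- s') + 2 / real n)) sequentially"
    have ix: "inj_on (\<lambda>k. Xs k \<omega>) {..<n}" for n using h by (auto intro!: inj_onI)
    have iy: "inj_on (\<lambda>k. Ys k \<omega>) {..<n}" for n using h by (auto intro!: inj_onI)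
    have H: "prob {\<omega>\<in>space M. X \<omega> \<le> x \<and> Y \<omega> \<le> y} = A (F x) (G y)" for x y
      unfolding F_def G_def by (rule assms(7))
    show "(\<lambda>n. SUP p\<in>{0..1} \<times> {0..1}.
        \<bar>bernstein_kernel (nat \<lfloor>real n powr s\<rfloor>)
            (emp_copula n (\<lambda>k. Xs k \<omega>) (\<lambda>k. Ys k \<omega>)) (fst p) (snd p) - K (fst p) (snd p)\<bar>)
        \<longlonglongrightarrow> 0"
      by (rule det_main[where F=F and G=G, OF assms(6) assms(8) assms(9) s'(2) s'(3) F01 G01 ix iy]) (use h H in simp)
  qed
qed

end
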